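(* Let $\mathrm T=(\mathcal T,\{x_I\}_{I\in\mathcal T^*},\{r_I\}_{I\in\mathcal T^*})$ be an $s$-tree in a complete doubling metric space $(X,d)$ such that $\mathcal T$ is closed in $\Sigma_N$, and let $K$ be the $s$-set generated by $\mathrm T$. Then $K$ is $s$-regular, and $\dim_H K=\overline{\dim}_M K$.
   Context: Words: for $N\ge2$ let $A_N=\{0,\dots,N-1\}$ and $\Sigma_N=A_N^{\mathbb N}$ with the product topology. For $\mathcal T\subseteq\Sigma_N$, $\mathcal T^*$ is the set of all finite prefixes $\omega|_k=\omega_1\cdots\omega_k$ ($k\ge0$, $\omega|_0=\varnothing$ the empty word) of elements $\omega\in\mathcal T$, $|I|$ is the length of $I$, and $\mathcal T_k=\{I\in\mathcal T^*:|I|=k\}$. $IJ$ denotes concatenation. For finite or infinite words $x,y$ with $|x|\le|y|$, $x\prec y$ means $x$ is a prefix of $y$, and $x,y$ are incomparable if $x_k\ne y_k$ for some $1\le k\le|x|$. $s$-tree: Let $(X,d)$ be a metric space, $N\ge2$, $s\in[0,\infty)$, $\varnothing\ne\mathcal T\subseteq\Sigma_N$. A triple $(\mathcal T,\{x_I\}_{I\in\mathcal T^*},\{r_I\}_{I\in\mathcal T^*})$ with $x_I\in X$, $0<r_I<\infty$ is an $s$-tree if there are constants $\rho,C,D\in(0,\infty)$ with: (T1) $d(x_I,x_J)\ge C(r_I+r_J)$ for all incomparable $I,J\in\mathcal T^*$; (T2) $\operatorname{diam}\{x_{IJ}:IJ\in\mathcal T^*\}\le Dr_I$ for all $I\in\mathcal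 T^*$; (T3) $\sum_{|J|=n,\,IJ\in\mathcal T^*}r_{IJ}^s=r_I^s$ for all $I\in\mathcal T^*$, $n\ge0$; (T4) $r_I\to0$ as $|I|\to\infty$; (T5) $r_{Ij}\ge\rho r_I$ whenever $j\in A_N$, $Ij\in\mathcal T^*$. The $s$-set generated by the tree is $K=\{x_\omega:\omega\in\mathcal T,\ x_\omega \text{ exists}\}$, where $x_\omega=\lim_{n\to\infty}x_{\omega|_n}$. A compact set $K\subseteq X$ is $s$-regular if there are a Borel measure $\mu$ and constants $0<\alpha,\beta,R_0<\infty$ with $0<\mu(K)\le\mu(X)<\infty$ and $\alpha r^s<\mu(B(x,r))<\beta r^s$ for all $x\in K$, $0<r\le R_0$. $\dim_H$ is Hausdorff dimension and $\overline{\dim}_M$ upper Minkowski (box) dimension. *)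

theory Defs
  imports "HOL-Analysis.Analysis" "HOL-Library.Liminf_Limsup"
begin

text \<open>Infinite words over A_N = {0..N-1} are functions nat => nat (letter omega_{k+1}
of the paper is omega k here); finite words are lists.\<close>

definition Sigma_N :: "nat \<Rightarrow> (nat \<Rightarrow> nat) set" where
  "Sigma_N N = {\<omega>. \<forall>i. \<omega> i < N}"

definition word_prefix :: "(nat \<Rightarrow> nat) \<Rightarrow> nat \<Rightarrow> nat list" where
  "word_prefix \<omega> k = map \<omega> [0..<k]"

definition Tstar :: "(nat \<Rightarrow> nat) set \<Rightarrow> nat list set" where
  "Tstar T = {word_prefix \<omega> k | \<omega> k. \<omega> \<in> T}"

definition incomparable :: "nat list \<Rightarrow> nat list \<Rightarrow> bool" where
  "incomparable I J \<longleftrightarrow> (\<exists>k < min (length I) (length J). I ! k \<noteq> J ! k)"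

definition s_tree :: "nat \<Rightarrow> real \<Rightarrow> (nat \<Rightarrow> nat) set \<Rightarrow> (nat list \<Rightarrow> 'a::metric_space)
    \<Rightarrow> (nat list \<Rightarrow> real) \<Rightarrow> bool" where
  "s_tree N s T x r \<longleftrightarrow>
     N \<ge> 2 \<and> s \<ge> 0 \<and> T \<noteq> {} \<and> T \<subseteq> Sigma_N N \<and>
     (\<forall>I \<in> Tstar T. 0 < r I) \<and>
     (\<exists>\<rho> C D. 0 < \<rho> \<and> 0 < C \<and> 0 < D \<and>
       \<comment> \<open>(T1)\<close>
       (\<forall>I \<in> Tstar T. \<forall>J \<in> Tstar T. incomparable I J \<longrightarrow> dist (x I) (x J) \<ge> C * (r I + r J)) \<and>
       \<comment> \<open>(T2)\<close>
       (\<forall>I \<in> Tstar T. bounded {x (I @ J) | J. I @ J \<in> Tstar T} \<and>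
                       diameter {x (I @ J) | J. I @ J \<in> Tstar T} \<le> D * r I) \<and>
       \<comment> \<open>(T3)\<close>
       (\<forall>I \<in> Tstar T. \<forall>n::nat.
          (\<Sum>J \<in> {J. length J = n \<and> I @ J \<in> Tstar T}. r (I @ J) powr s) = r I powr s) \<and>
       \<comment> \<open>(T4)\<close>
       (\<forall>\<epsilon>>0. \<exists>m. \<forall>I \<in> Tstar T. length I \<ge> m \<longrightarrow> r I < \<epsilon>) \<and>
       \<comment> \<open>(T5)\<close>
       (\<forall>I j. j < N \<longrightarrow> I @ [j] \<in> Tstar T \<longrightarrow> r (I @ [j]) \<ge> \<rho> * r I))"

definition s_set :: "(nat \<Rightarrow> nat) set \<Rightarrow> (nat list \<Rightarrow> 'a::metric_space) \<Rightarrow> 'a set" where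
  "s_set T x = {p. \<exists>\<omega> \<in> T. (\<lambda>n. x (word_prefix \<omega> n)) \<longlonglongrightarrow> p}"

definition doubling_space :: "'a::metric_space itself \<Rightarrow> bool" where
  "doubling_space _ \<longleftrightarrow> (\<exists>M::nat. \<forall>(z::'a) \<rho>. \<rho> > 0 \<longrightarrow>
      (\<exists>F. finite F \<and> card F \<le> M \<and> ball z \<rho> \<subseteq> (\<Union>y\<in>F. ball y (\<rho> / 2))))"

definition s_regular :: "real \<Rightarrow> 'a::metric_space set \<Rightarrow> bool" where
  "s_regular s K \<longleftrightarrow> compact K \<and>
     (\<exists>(\<mu>::'a measure) \<alpha> \<beta> R0. sets \<mu> = sets borel \<and> 0 < \<alpha> \<and> 0 < \<beta> \<and> 0 < R0 \<and>
        0 < emeasure \<mu> K \<and> emeasure \<mu> (space \<mu>) < \<infinity> \<and>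
        (\<forall>z \<in> K. \<forall>\<rho>. 0 < \<rho> \<and> \<rho> \<le> R0 \<longrightarrow>
           ennreal (\<alpha> * \<rho> powr s) < emeasure \<mu> (ball z \<rho>) \<and>
           emeasure \<mu> (ball z \<rho>) < ennreal (\<beta> * \<rho> powr s)))"

text \<open>Hausdorff measure via countable delta-covers (Isabelle's diam is 0 on unbounded sets,
  so covering sets are required to be bounded; diam^0 := 1 for nonempty sets).\<close>

definition hausdorff_pre :: "real \<Rightarrow> real \<Rightarrow> 'a::metric_space set \<Rightarrow> ennreal" where
  "hausdorff_pre s \<delta> A = (INF C \<in> {C :: nat \<Rightarrow> 'a set. A \<subseteq> (\<Union>i. C i) \<and>
        (\<forall>i. bounded (C i) \<and> diameter (C i) \<le> \<delta>)}.
      (\<Sum>i. ennreal (if C i = {} then 0 else if s = 0 then 1 else diameter (C i) powr s)))"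

definition hausdorff_measure :: "real \<Rightarrow> 'a::metric_space set \<Rightarrow> ennreal" where
  "hausdorff_measure s A = (SUP \<delta> \<in> {0<..}. hausdorff_pre s \<delta> A)"

definition hausdorff_dim :: "'a::metric_space set \<Rightarrow> ereal" where
  "hausdorff_dim A = Inf {ereal s | s. s \<ge> 0 \<and> hausdorff_measure s A = 0}"

definition covering_number :: "'a::metric_space set \<Rightarrow> real \<Rightarrow> nat" where
  "covering_number A \<delta> = Inf {card F | F. finite F \<and> A \<subseteq> \<Union>F \<and> (\<forall>B\<in>F. bounded B \<and> diameter B \<le> \<delta>)}"

definition upper_minkowski_dim :: "'a::metric_space set \<Rightarrow> ereal" where
  "upper_minkowski_dim A =
     Limsup (at_right 0) (\<lambda>\<delta>. ereal (ln (real (covering_number A \<delta>)) / - ln \<delta>))"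

end

theory Submission
  imports Defs
begin

lemma word_prefix_Suc: "word_prefix w (Suc n) = word_prefix w n @ [w n]"
  by (simp add: word_prefix_def)

lemma length_word_prefix[simp]: "length (word_prefix w n) = n"
  by (simp add: word_prefix_def)

lemma word_prefix_nth: "k < n \<Longrightarrow> word_prefix w n ! k = w k"
  by (simp add: word_prefix_def)

lemma take_word_prefix: "k \<le> n \<Longrightarrow> take k (word_prefix w n) = word_prefix w k"
  by (simp add: word_prefix_def take_map)

lemma not_incomparable_prefix:
  assumes "\<not> incomparable I J" "length I \<le> length J"
  shows "I = take (length I) J"
  using assms unfolding incomparable_def
  by (intro nth_equalityI) auto

locale stree =
  fixes N :: nat and s :: real and T :: "(nat \<Rightarrow> nat) set"
    and x :: "nat list \<Rightarrow> 'a::complete_space" and r :: "nat list \<Rightarrow> real"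
    and \<rho> C D :: real
  assumes N2: "N \<ge> 2" and s0: "s \<ge> 0" and Tne: "T \<noteq> {}" and TS: "T \<subseteq> Sigma_N N"
    and rpos: "\<And>I. I \<in> Tstar T \<Longrightarrow> 0 < r I"
    and rho: "0 < \<rho>" and Cpos: "0 < C" and Dpos: "0 < D"
    and T1: "\<And>I J. I \<in> Tstar T \<Longrightarrow> J \<in> Tstar T \<Longrightarrow> incomparable I J \<Longrightarrow> dist (x I) (x J) \<ge> C * (r I + r J)"
    and T2b: "\<And>I. I \<in> Tstar T \<Longrightarrow> bounded {x (I @ J) | J. I @ J \<in> Tstar T}"
    and T2d: "\<And>I. I \<in> Tstar T \<Longrightarrow> diameter {x (I @ J) | J. I @ J \<in> Tstar T} \<le> D * r I"
    and T3: "\<And>I n. I \<in> Tstar T \<Longrightarrow> (\<Sum>J \<in> {J. length J = n \<and> I @ J \<in> Tstar T}. r (I @ J) powr s) = r I powr s"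
    and T4: "\<And>\<epsilon>. \<epsilon> > 0 \<Longrightarrow> \<exists>m. \<forall>I \<in> Tstar T. length I \<ge> m \<longrightarrow> r I < \<epsilon>"
    and T5: "\<And>I j. j < N \<Longrightarrow> I @ [j] \<in> Tstar T \<Longrightarrow> r (I @ [j]) \<ge> \<rho> * r I"
    and Tclosed: "closedin (top_of_set (Sigma_N N)) T"
begin

lemma Tstar_iff: "I \<in> Tstar T \<longleftrightarrow> (\<exists>w\<in>T. I = word_prefix w (length I))"
  unfolding Tstar_def by auto

lemma prefix_in: "w \<in> T \<Longrightarrow> word_prefix w n \<in> Tstar T"
  unfolding Tstar_def by auto

lemma Tstar_append: "I @ J \<in> Tstar T \<Longrightarrow> I \<in> Tstar T"
proof -
  assume "I @ J \<in> Tstar T"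
  then obtain w where w: "w \<in> T" "I @ J = word_prefix w (length (I @ J))" using Tstar_iff by blast
  have "I = take (length I) (I @ J)" by simp
  also have "\<dots> = word_prefix w (length I)" using w by (simp add: take_word_prefix)
  finally show ?thesis using w prefix_in by metis
qed

lemma Tstar_take: "I \<in> Tstar T \<Longrightarrow> take k I \<in> Tstar T"
  by (metis Tstar_append append_take_drop_id)

lemma nil_in: "[] \<in> Tstar T"
  using Tne prefix_in[of _ 0] by (auto simp: word_prefix_def)

lemma letters: "I \<in> Tstar T \<Longrightarrow> set I \<subseteq> {..<N}"
  using TS unfolding Tstar_def Sigma_N_def word_prefix_def by fastforce

lemma child_ex: "I \<in> Tstar T \<Longrightarrow> \<exists>j<N. I @ [j] \<in> Tstar T"
proof -
  assume "I \<in> Tstar T"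
  then obtain w where w: "w \<in> T" "I = word_prefix w (length I)" using Tstar_iff by blast
  have "I @ [w (length I)] \<in> Tstar T" using w prefix_in[of w "Suc (length I)"]
    by (metis word_prefix_Suc)
  moreover have "w (length I) < N" using w TS by (auto simp: Sigma_N_def)
  ultimately show ?thesis by blast
qed

lemma finite_level: "finite {J. length J = n \<and> I @ J \<in> Tstar T}"
proof -
  have "{J. length J = n \<and> I @ J \<in> Tstar T} \<subseteq> {J. set J \<subseteq> {..<N} \<and> length J = n}"
    using letters by fastforce
  thus ?thesis by (rule finite_subset) (simp add: finite_lists_length_eq)
qed

lemma finite_upto: "finite {J \<in> Tstar T. length J \<le> m}"
proof -
  have "{J \<in> Tstar T. length J \<le> m} \<subseteq> {J. set J \<subseteq> {..<N} \<and> length J \<le> m}"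
    using letters by fastforce
  thus ?thesis by (rule finite_subset) (simp add: finite_lists_length_le)
qed

definition ch :: "nat list \<Rightarrow> nat set" where "ch I = {j. I @ [j] \<in> Tstar T}"

lemma ch_lt: "j \<in> ch I \<Longrightarrow> j < N"
  unfolding ch_def using letters by fastforce

definition m :: "nat list \<Rightarrow> real" where "m I = r I powr s"

lemma m_pos: "I \<in> Tstar T \<Longrightarrow> 0 < m I" using rpos[of I] by (simp add: m_def)
lemma m_nn: "0 \<le> m I" by (simp add: m_def)

lemma T3_one: "I \<in> Tstar T \<Longrightarrow> (\<Sum>j\<in>ch I. m (I @ [j])) = m I"
proof -
  assume I: "I \<in> Tstar T"
  have e: "{J. length J = 1 \<and> I @ J \<in> Tstar T} = (\<lambda>j. [j]) ` ch I"
    by (auto simp: ch_def length_Suc_conv)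
  have "(\<Sum>j\<in>ch I. m (I @ [j])) = (\<Sum>J\<in>(\<lambda>j. [j]) ` ch I. r (I @ J) powr s)"
    by (subst sum.reindex) (auto simp: inj_on_def m_def)
  also have "\<dots> = m I" using T3[OF I, of 1] e by (simp add: m_def)
  finally show ?thesis .
qed

end

context stree
begin

lemma finite_ch: "finite (ch I)"
  using ch_lt by (meson finite_nat_set_iff_bounded)

definition a :: "nat list \<Rightarrow> real" where
  "a I = (\<Sum>k<length I. \<Sum>i\<in>{i\<in>ch (take k I). i < I ! k}. m (take k I @ [i]))"

definition Q :: "nat list \<Rightarrow> nat \<Rightarrow> real" where
  "Q I j = a I + (\<Sum>i\<in>{i\<in>ch I. i < j}. m (I @ [i]))"

lemma a_nil[simp]: "a [] = 0" by (simp add: a_def)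

lemma a_snoc: "a (I @ [j]) = Q I j"
proof -
  have "a (I @ [j]) = (\<Sum>k<Suc (length I). \<Sum>i\<in>{i\<in>ch (take k (I@[j])). i < (I@[j]) ! k}. m (take k (I@[j]) @ [i]))"
    by (simp add: a_def)
  also have "\<dots> = (\<Sum>k<length I. \<Sum>i\<in>{i\<in>ch (take k (I@[j])). i < (I@[j]) ! k}. m (take k (I@[j]) @ [i]))
      + (\<Sum>i\<in>{i\<in>ch I. i < j}. m (I @ [i]))"
    by simp
  also have "(\<Sum>k<length I. \<Sum>i\<in>{i\<in>ch (take k (I@[j])). i < (I@[j]) ! k}. m (take k (I@[j]) @ [i])) = a I"
    unfolding a_def by (intro sum.cong) (auto simp: nth_append)
  finally show ?thesis by (simp add: Q_def)
qed

lemma a_nn: "0 \<le> a I" unfolding a_def by (intro sum_nonneg) (simp add: m_nn)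

definition iv :: "nat list \<Rightarrow> real set" where "iv I = {a I ..< a I + m I}"

lemma Q_mono: "j \<le> j' \<Longrightarrow> Q I j \<le> Q I j'"
  unfolding Q_def by (intro add_left_mono sum_mono2) (auto intro: finite_subset[OF _ finite_ch] simp: m_nn)

lemma Q_Suc: "Q I (Suc j) = Q I j + (if j \<in> ch I then m (I @ [j]) else 0)"
proof (cases "j \<in> ch I")
  case True
  have e: "{i\<in>ch I. i < Suc j} = insert j {i\<in>ch I. i < j}" using True by (auto simp: less_Suc_eq)
  have f: "finite {i\<in>ch I. i < j}" using finite_ch[of I] by simp
  show ?thesis unfolding Q_def e using True f by (simp add: sum.insert)
next
  case False
  have e: "{i\<in>ch I. i < Suc j} = {i\<in>ch I. i < j}" using False by (auto simp: less_Suc_eq)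
  show ?thesis unfolding Q_def e using False by simp
qed

lemma Q_N: "I \<in> Tstar T \<Longrightarrow> Q I N = a I + m I"
proof -
  assume I: "I \<in> Tstar T"
  have "{i\<in>ch I. i < N} = ch I" using ch_lt by auto
  thus ?thesis using T3_one[OF I] by (simp add: Q_def)
qed

lemma Q_le_N: "I \<in> Tstar T \<Longrightarrow> Q I j \<le> a I + m I"
proof -
  assume I: "I \<in> Tstar T"
  have "Q I j \<le> Q I (max j N)" by (rule Q_mono) simp
  also have "\<dots> = Q I N"
  proof -
    have "{i\<in>ch I. i < max j N} = {i\<in>ch I. i < N}" using ch_lt by (auto simp: less_max_iff_disj)
    thus ?thesis by (simp add: Q_def)
  qed
  finally show ?thesis using Q_N[OF I] by simp
qed

lemma child_sub: "I \<in> Tstar T \<Longrightarrow> j \<in> ch I \<Longrightarrow> iv (I @ [j]) \<subseteq> iv I"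
proof -
  assume I: "I \<in> Tstar T" and j: "j \<in> ch I"
  have 1: "a I \<le> a (I @ [j])" using Q_mono[of 0 j I] by (simp add: a_snoc Q_def)
  have "a (I @ [j]) + m (I @ [j]) = Q I (Suc j)" using j by (simp add: a_snoc Q_Suc)
  also have "\<dots> \<le> a I + m I" by (rule Q_le_N[OF I])
  finally show ?thesis using 1 by (auto simp: iv_def)
qed

lemma child_disj: "j < j' \<Longrightarrow> j \<in> ch I \<Longrightarrow> iv (I @ [j]) \<inter> iv (I @ [j']) = {}"
proof -
  assume jj: "j < j'" and j: "j \<in> ch I"
  have "a (I @ [j]) + m (I @ [j]) = Q I (Suc j)" using j by (simp add: a_snoc Q_Suc)
  also have "\<dots> \<le> Q I j'" using jj by (intro Q_mono) simp
  finally show ?thesis by (auto simp: iv_def a_snoc)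
qed

lemma child_cover: "I \<in> Tstar T \<Longrightarrow> t \<in> iv I \<Longrightarrow> \<exists>j\<in>ch I. t \<in> iv (I @ [j])"
proof -
  assume I: "I \<in> Tstar T" and t: "t \<in> iv I"
  have ex: "t < Q I (Suc (N - 1))" using t Q_N[OF I] N2 by (auto simp: iv_def)
  define j where "j = (LEAST j. t < Q I (Suc j))"
  have j1: "t < Q I (Suc j)" unfolding j_def by (rule LeastI[of "\<lambda>j. t < Q I (Suc j)" "N - 1", OF ex])
  have j0: "Q I j \<le> t"
  proof (cases j)
    case 0 thus ?thesis using t by (simp add: Q_def iv_def)
  next
    case (Suc k)
    have "k < j" using Suc by simp
    hence "\<not> t < Q I (Suc k)" unfolding j_def by (rule not_less_Least)
    thus ?thesis using Suc by simp
  qed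
  have jc: "j \<in> ch I"
  proof (rule ccontr)
    assume "j \<notin> ch I" hence "Q I (Suc j) = Q I j" by (simp add: Q_Suc)
    thus False using j0 j1 by simp
  qed
  have "Q I (Suc j) = a (I @ [j]) + m (I @ [j])" using jc by (simp add: Q_Suc a_snoc)
  hence "t \<in> iv (I @ [j])" using j0 j1 by (simp add: iv_def a_snoc)
  thus ?thesis using jc by blast
qed

lemma desc_sub: "I @ J \<in> Tstar T \<Longrightarrow> iv (I @ J) \<subseteq> iv I"
proof (induction J rule: rev_induct)
  case Nil thus ?case by simp
next
  case (snoc j J)
  have IJ: "I @ J \<in> Tstar T" using snoc.prems Tstar_append[of "I @ J" "[j]"] by simp
  have "j \<in> ch (I @ J)" using snoc.prems by (simp add: ch_def)
  hence "iv (I @ J @ [j]) \<subseteq> iv (I @ J)" using child_sub[OF IJ] by simp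
  thus ?case using snoc.IH[OF IJ] by simp
qed

lemma incomp_disj:
  assumes I: "I \<in> Tstar T" and J: "J \<in> Tstar T" and inc: "incomparable I J"
  shows "iv I \<inter> iv J = {}"
proof -
  define k where "k = (LEAST k. k < min (length I) (length J) \<and> I ! k \<noteq> J ! k)"
  have k: "k < min (length I) (length J) \<and> I ! k \<noteq> J ! k"
    unfolding k_def using inc unfolding incomparable_def by (metis (mono_tags, lifting) LeastI)
  have pre: "take k I = take k J"
  proof (rule nth_equalityI)
    show "length (take k I) = length (take k J)" using k by simp
    fix i assume "i < length (take k I)"
    hence "i < k" by simp
    hence "\<not> (i < min (length I) (length J) \<and> I ! i \<noteq> J ! i)" unfolding k_def by (rule not_less_Least)
    thus "take k I ! i = take k J ! i" using \<open>i < k\<close> k by auto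
  qed
  define P where "P = take k I"
  have dI: "I = P @ [I ! k] @ drop (Suc k) I" unfolding P_def using k
    by (simp add: Cons_nth_drop_Suc)
  have dJ: "J = P @ [J ! k] @ drop (Suc k) J" unfolding P_def pre using k
    by (simp add: Cons_nth_drop_Suc)
  have s1: "iv I \<subseteq> iv (P @ [I ! k])" using desc_sub[of "P @ [I!k]" "drop (Suc k) I"] I dI by simp
  have s2: "iv J \<subseteq> iv (P @ [J ! k])" using desc_sub[of "P @ [J!k]" "drop (Suc k) J"] J dJ by simp
  have cI: "I ! k \<in> ch P" using I dI Tstar_append[of "P @ [I!k]"] by (simp add: ch_def) (metis append.assoc)
  have cJ: "J ! k \<in> ch P" using J dJ Tstar_append[of "P @ [J!k]"] by (simp add: ch_def) (metis append.assoc)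
  have "iv (P @ [I ! k]) \<inter> iv (P @ [J ! k]) = {}"
  proof (cases "I ! k < J ! k")
    case True thus ?thesis using child_disj cI by blast
  next
    case False hence "J ! k < I ! k" using k by simp
    thus ?thesis using child_disj cJ by blast
  qed
  thus ?thesis using s1 s2 by blast
qed

end

context stree
begin

definition S :: "nat list \<Rightarrow> 'a set" where "S I = {x (I @ J) | J. I @ J \<in> Tstar T}"

lemma S_bounded: "I \<in> Tstar T \<Longrightarrow> bounded (S I)" unfolding S_def by (rule T2b)
lemma S_diam: "I \<in> Tstar T \<Longrightarrow> diameter (S I) \<le> D * r I" unfolding S_def by (rule T2d)

lemma S_dist: "I \<in> Tstar T \<Longrightarrow> p \<in> S I \<Longrightarrow> q \<in> S I \<Longrightarrow> dist p q \<le> D * r I"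
  using diameter_bounded_bound[OF S_bounded, of I p q] S_diam[of I] by linarith

lemma prefix_in_S: "w \<in> T \<Longrightarrow> n \<le> k \<Longrightarrow> x (word_prefix w k) \<in> S (word_prefix w n)"
proof -
  assume w: "w \<in> T" and nk: "n \<le> k"
  have "word_prefix w k = word_prefix w n @ drop n (word_prefix w k)"
    using take_word_prefix[OF nk, of w] by (metis append_take_drop_id)
  hence "x (word_prefix w k) = x (word_prefix w n @ drop n (word_prefix w k)) \<and> word_prefix w n @ drop n (word_prefix w k) \<in> Tstar T"
    using prefix_in[OF w, of k] by simp
  thus ?thesis unfolding S_def by blast
qed

lemma self_in_S: "I \<in> Tstar T \<Longrightarrow> x I \<in> S I"
proof -
  assume "I \<in> Tstar T"
  hence "x I = x (I @ []) \<and> I @ [] \<in> Tstar T" by simp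
  thus ?thesis unfolding S_def by blast
qed

lemma seq_close: "w \<in> T \<Longrightarrow> n \<le> k \<Longrightarrow> dist (x (word_prefix w n)) (x (word_prefix w k)) \<le> D * r (word_prefix w n)"
  by (rule S_dist[OF prefix_in prefix_in_S[OF _ order_refl] prefix_in_S])

lemma r_small: "e > 0 \<Longrightarrow> \<exists>M. \<forall>I\<in>Tstar T. length I \<ge> M \<longrightarrow> D * r I < e"
proof -
  assume e: "e > 0"
  obtain M where "\<forall>I\<in>Tstar T. length I \<ge> M \<longrightarrow> r I < e / D" using T4[of "e / D"] e Dpos by auto
  hence "\<forall>I\<in>Tstar T. length I \<ge> M \<longrightarrow> D * r I < e" using Dpos by (simp add: pos_less_divide_eq mult.commute)
  thus ?thesis by blast
qed

definition pi :: "(nat \<Rightarrow> nat) \<Rightarrow> 'a" where "pi w = lim (\<lambda>n. x (word_prefix w n))"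

lemma pi_lim: assumes w: "w \<in> T" shows "(\<lambda>n. x (word_prefix w n)) \<longlonglongrightarrow> pi w"
proof -
  have "Cauchy (\<lambda>n. x (word_prefix w n))"
  proof (rule metric_CauchyI)
    fix e :: real assume e: "0 < e"
    obtain M where M: "\<forall>I\<in>Tstar T. length I \<ge> M \<longrightarrow> D * r I < e / 2" using r_small[of "e/2"] e by auto
    have dM: "D * r (word_prefix w M) < e / 2" using bspec[OF M prefix_in[OF w, of M]] by simp
    have b: "dist (x (word_prefix w M)) (x (word_prefix w k)) < e / 2" if "k \<ge> M" for k
      using seq_close[OF w that] dM by linarith
    show "\<exists>M. \<forall>m\<ge>M. \<forall>n\<ge>M. dist (x (word_prefix w m)) (x (word_prefix w n)) < e"
    proof (intro exI allI impI)
      fix a b assume "a \<ge> M" "b \<ge> M"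
      thus "dist (x (word_prefix w a)) (x (word_prefix w b)) < e"
        using b[of a] b[of b] dist_triangle2[of "x (word_prefix w a)" "x (word_prefix w b)" "x (word_prefix w M)"]
        by (simp add: dist_commute)
    qed
  qed
  hence "convergent (\<lambda>n. x (word_prefix w n))" by (simp add: Cauchy_convergent_iff)
  thus ?thesis unfolding pi_def by (simp add: convergent_LIMSEQ_iff)
qed

lemma dist_pi: assumes w: "w \<in> T"
  shows "dist (x (word_prefix w n)) (pi w) \<le> D * r (word_prefix w n)"
proof (rule LIMSEQ_le_const2)
  show "(\<lambda>k. dist (x (word_prefix w n)) (x (word_prefix w k))) \<longlonglongrightarrow> dist (x (word_prefix w n)) (pi w)"
    by (intro tendsto_intros pi_lim[OF w])
  show "\<exists>N. \<forall>k\<ge>N. dist (x (word_prefix w n)) (x (word_prefix w k)) \<le> D * r (word_prefix w n)"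
    using seq_close[OF w] by blast
qed

lemma pi_in_closure: assumes w: "w \<in> T" shows "pi w \<in> closure (S (word_prefix w n))"
proof (rule Lim_in_closed_set[OF closed_closure _ _ pi_lim[OF w]])
  show "\<forall>\<^sub>F k in sequentially. x (word_prefix w k) \<in> closure (S (word_prefix w n))"
  proof (rule eventually_sequentiallyI[of n])
    fix k assume "n \<le> k"
    thus "x (word_prefix w k) \<in> closure (S (word_prefix w n))"
      by (rule subsetD[OF closure_subset prefix_in_S[OF w]])
  qed
qed simp

lemma s_set_eq: "s_set T x = pi ` T"
proof (rule set_eqI)
  fix p
  show "p \<in> s_set T x \<longleftrightarrow> p \<in> pi ` T"
  proof
    assume "p \<in> s_set T x"
    then obtain v where v: "v \<in> T" "(\<lambda>n. x (word_prefix v n)) \<longlonglongrightarrow> p" by (auto simp: s_set_def)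
    have "p = pi v" by (rule LIMSEQ_unique[OF v(2) pi_lim[OF v(1)]])
    thus "p \<in> pi ` T" using v(1) by simp
  next
    assume "p \<in> pi ` T"
    then obtain v where v: "v \<in> T" "p = pi v" by auto
    thus "p \<in> s_set T x" using pi_lim[OF v(1)] unfolding s_set_def by auto
  qed
qed

lemma Sigma_PiE: "Sigma_N N = PiE UNIV (\<lambda>_. {..<N})"
  by (auto simp: Sigma_N_def PiE_def extensional_def)

lemma compact_T: "compact T"
proof -
  have c: "compact {..<N::nat}" by (rule finite_imp_compact) simp
  have "compactin (product_topology (\<lambda>_. euclidean) UNIV) (PiE UNIV (\<lambda>_::nat. {..<N}))"
    by (simp add: compactin_PiE c)
  hence "compact (Sigma_N N)" by (simp add: Sigma_PiE euclidean_product_topology)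
  thus ?thesis by (rule closedin_compact[OF _ Tclosed])
qed

lemma cont_pi: "continuous_on T pi"
  unfolding continuous_on_topological
proof (intro ballI allI impI)
  fix w B assume w: "w \<in> T" and B: "open B" "pi w \<in> B"
  obtain e where e: "e > 0" "ball (pi w) e \<subseteq> B" using B open_contains_ball by blast
  obtain M where M: "\<forall>I\<in>Tstar T. length I \<ge> M \<longrightarrow> D * r I < e / 2" using r_small[of "e/2"] e by auto
  have dM: "D * r (word_prefix w M) < e / 2" using bspec[OF M prefix_in[OF w, of M]] by simp
  define A where "A = {f. \<forall>i\<in>{..<M}. f ((\<lambda>i. i) i) \<in> {w i}}"
  have "open A" unfolding A_def by (rule product_topology_basis') (simp_all add: open_discrete)
  moreover have "w \<in> A" by (simp add: A_def)
  moreover have "pi v \<in> B" if v: "v \<in> T" "v \<in> A" for v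
  proof -
    have eq: "word_prefix v M = word_prefix w M" using v(2) by (simp add: A_def word_prefix_def)
    have "dist (pi w) (pi v) \<le> dist (x (word_prefix w M)) (pi w) + dist (x (word_prefix w M)) (pi v)"
      by (rule dist_triangle3)
    also have "\<dots> < e" using dist_pi[OF w, of M] dist_pi[OF v(1), of M, unfolded eq] dM by linarith
    finally show ?thesis using e by auto
  qed
  ultimately show "\<exists>A. open A \<and> w \<in> A \<and> (\<forall>y\<in>T. y \<in> A \<longrightarrow> pi y \<in> B)" by blast
qed

lemma compact_K: "compact (s_set T x)"
  unfolding s_set_eq by (rule compact_continuous_image[OF cont_pi compact_T])

lemma K_ne: "s_set T x \<noteq> {}" using Tne by (simp add: s_set_eq)

end

context stree
begin

primrec w :: "real \<Rightarrow> nat \<Rightarrow> nat list" where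
  "w t 0 = []"
| "w t (Suc n) = w t n @ [THE j. j \<in> ch (w t n) \<and> t \<in> iv (w t n @ [j])]"

lemma the_child: "I \<in> Tstar T \<Longrightarrow> t \<in> iv I \<Longrightarrow>
   (THE j. j \<in> ch I \<and> t \<in> iv (I @ [j])) \<in> ch I \<and> t \<in> iv (I @ [THE j. j \<in> ch I \<and> t \<in> iv (I @ [j])])"
proof -
  assume I: "I \<in> Tstar T" and t: "t \<in> iv I"
  obtain j where j: "j \<in> ch I" "t \<in> iv (I @ [j])" using child_cover[OF I t] by blast
  have u: "j' = j" if "j' \<in> ch I" "t \<in> iv (I @ [j'])" for j'
  proof (rule ccontr)
    assume "j' \<noteq> j"
    hence "j' < j \<or> j < j'" by auto
    thus False using child_disj[of j' j I] child_disj[of j j' I] j that by blast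
  qed
  have "(THE j. j \<in> ch I \<and> t \<in> iv (I @ [j])) = j" using j u by blast
  thus ?thesis using j by simp
qed

lemma w_props: "t \<in> iv [] \<Longrightarrow> w t n \<in> Tstar T \<and> length (w t n) = n \<and> t \<in> iv (w t n)"
proof (induction n)
  case 0 thus ?case using nil_in by simp
next
  case (Suc n)
  hence h: "w t n \<in> Tstar T" "length (w t n) = n" "t \<in> iv (w t n)" by auto
  note c = the_child[OF h(1) h(3)]
  show ?case using c h by (simp add: ch_def)
qed

lemma w_char: assumes t: "t \<in> iv []" and I: "I \<in> Tstar T" "length I = n"
  shows "w t n = I \<longleftrightarrow> t \<in> iv I"
proof
  assume "w t n = I" thus "t \<in> iv I" using w_props[OF t, of n] by simp
next
  assume ti: "t \<in> iv I"
  show "w t n = I"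
  proof (rule ccontr)
    assume ne: "w t n \<noteq> I"
    have "incomparable (w t n) I"
    proof (rule ccontr)
      assume "\<not> incomparable (w t n) I"
      have l: "length (w t n) = n" using w_props[OF t, of n] by simp
      have "w t n = take (length (w t n)) I" by (rule not_incomparable_prefix[OF \<open>\<not> incomparable (w t n) I\<close>]) (simp add: l I(2))
      thus False using ne l I(2) by simp
    qed
    thus False using incomp_disj[of "w t n" I] w_props[OF t, of n] I ti by blast
  qed
qed

definition om :: "real \<Rightarrow> nat \<Rightarrow> nat" where "om t = (\<lambda>k. w t (Suc k) ! k)"

lemma om_prefix: "t \<in> iv [] \<Longrightarrow> word_prefix (om t) n = w t n"
proof (induction n)
  case 0 thus ?case by (simp add: word_prefix_def)
next
  case (Suc n)
  have l: "length (w t n) = n" using w_props[OF Suc.prems] by simp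
  have "om t n = (THE j. j \<in> ch (w t n) \<and> t \<in> iv (w t n @ [j]))" unfolding om_def using l by (simp add: nth_append)
  thus ?case using Suc by (simp add: word_prefix_Suc)
qed

lemma om_in_T: assumes t: "t \<in> iv []" shows "om t \<in> T"
proof -
  obtain Cl where Cl: "closed Cl" "T = Sigma_N N \<inter> Cl" using Tclosed closedin_closed by blast
  have "\<forall>n. \<exists>v. v \<in> T \<and> word_prefix v n = w t n"
  proof
    fix n show "\<exists>v. v \<in> T \<and> word_prefix v n = w t n"
      using w_props[OF t, of n] Tstar_iff[of "w t n"] by auto
  qed
  from choice[OF this] obtain v where v: "\<And>n. v n \<in> T" "\<And>n. word_prefix (v n) n = w t n" by blast
  have lim: "v \<longlonglongrightarrow> om t"
  proof -
    have "limitin (product_topology (\<lambda>_. euclidean) UNIV) v (om t) sequentially"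
      unfolding limitin_componentwise
    proof (intro conjI ballI)
      fix i :: nat
      have "eventually (\<lambda>n. v n i = om t i) sequentially"
      proof (rule eventually_sequentiallyI[of "Suc i"])
        fix n assume "Suc i \<le> n"
        have "v n i = word_prefix (v n) n ! i" using \<open>Suc i \<le> n\<close> by (simp add: word_prefix_nth)
        also have "\<dots> = word_prefix (om t) n ! i" using v(2)[of n] om_prefix[OF t, of n] by simp
        also have "\<dots> = om t i" using \<open>Suc i \<le> n\<close> by (simp add: word_prefix_nth)
        finally show "v n i = om t i" .
      qed
      thus "limitin euclidean (\<lambda>c. v c i) (om t i) sequentially"
        by (simp add: tendsto_discrete)
    qed auto
    thus ?thesis by (simp add: euclidean_product_topology)
  qed
  have "om t \<in> Cl" by (rule Lim_in_closed_set[OF Cl(1) _ _ lim]) (use v(1) Cl(2) in auto)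
  moreover have "om t \<in> Sigma_N N"
  proof -
    have "om t k < N" for k
    proof -
      have "k < length (w t (Suc k))" using w_props[OF t, of "Suc k"] by simp
      hence "w t (Suc k) ! k \<in> set (w t (Suc k))" by (rule nth_mem)
      hence "om t k \<in> set (w t (Suc k))" unfolding om_def .
      thus ?thesis using letters w_props[OF t, of "Suc k"] by blast
    qed
    thus ?thesis by (simp add: Sigma_N_def)
  qed
  ultimately show ?thesis using Cl(2) by blast
qed

end

context stree
begin

abbreviation "Mt \<equiv> m []"
abbreviation "\<Omega> \<equiv> iv []"

lemma Omega_eq: "\<Omega> = {0..<Mt}" by (simp add: iv_def)
lemma Mt_pos: "0 < Mt" by (rule m_pos[OF nil_in])

lemma iv_sub_Omega: "I \<in> Tstar T \<Longrightarrow> iv I \<subseteq> \<Omega>"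
  using desc_sub[of "[]" I] by simp

lemma iv_borel: "iv I \<in> sets lborel" by (simp add: iv_def)

definition Mr :: "real measure" where "Mr = restrict_space lborel \<Omega>"

lemma space_Mr: "space Mr = \<Omega>" by (simp add: Mr_def iv_def)

lemma sets_Mr_iff: "A \<in> sets Mr \<longleftrightarrow> A \<subseteq> \<Omega> \<and> A \<in> sets lborel"
  unfolding Mr_def by (rule sets_restrict_space_iff) (simp add: iv_def)

lemma emeasure_Mr: "A \<in> sets Mr \<Longrightarrow> emeasure Mr A = emeasure lborel A"
  unfolding Mr_def by (rule emeasure_restrict_space) (auto simp: iv_def sets_restrict_space_iff)

lemma w_meas: "(\<lambda>t. w t n) \<in> measurable Mr (count_space UNIV)"
  unfolding measurable_count_space_eq2_countable
proof (intro conjI ballI)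
  fix I :: "nat list" assume "I \<in> UNIV"
  have "(\<lambda>t. w t n) -` {I} \<inter> space Mr = (if I \<in> Tstar T \<and> length I = n then iv I else {})"
  proof (cases "I \<in> Tstar T \<and> length I = n")
    case True
    have "(\<lambda>t. w t n) -` {I} \<inter> \<Omega> = iv I"
    proof (rule set_eqI)
      fix t show "t \<in> (\<lambda>t. w t n) -` {I} \<inter> \<Omega> \<longleftrightarrow> t \<in> iv I"
        using w_char[of t I n] True iv_sub_Omega[of I] by auto
    qed
    thus ?thesis using True by (simp add: space_Mr)
  next
    case False
    have "(\<lambda>t. w t n) -` {I} \<inter> \<Omega> = {}"
    proof (rule set_eqI)
      fix t show "t \<in> (\<lambda>t. w t n) -` {I} \<inter> \<Omega> \<longleftrightarrow> t \<in> {}"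
        using w_props[of t n] False by auto
    qed
    thus ?thesis using False unfolding space_Mr by (simp only: if_False)
  qed
  moreover have "iv I \<in> sets Mr" if "I \<in> Tstar T" for I
    using sets_Mr_iff iv_sub_Omega[OF that] iv_borel by blast
  ultimately show "(\<lambda>t. w t n) -` {I} \<inter> space Mr \<in> sets Mr" by simp
qed simp

definition g :: "real \<Rightarrow> 'a" where "g t = pi (om t)"

lemma g_lim: "t \<in> \<Omega> \<Longrightarrow> (\<lambda>n. x (w t n)) \<longlonglongrightarrow> g t"
  using pi_lim[OF om_in_T, of t] om_prefix[of t] by (simp add: g_def)

lemma g_meas: "g \<in> borel_measurable Mr"
proof (rule borel_measurable_LIMSEQ_metric)
  fix n
  show "(\<lambda>t. x (w t n)) \<in> borel_measurable Mr"
    using measurable_compose[OF w_meas[of n], of x borel] by simp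
next
  fix t assume "t \<in> space Mr" thus "(\<lambda>n. x (w t n)) \<longlonglongrightarrow> g t" using g_lim by (simp add: space_Mr)
qed

lemma g_in_K: "t \<in> \<Omega> \<Longrightarrow> g t \<in> s_set T x"
  using om_in_T[of t] by (simp add: g_def s_set_eq)

definition mu :: "'a measure" where "mu = distr Mr borel g"

lemma sets_mu: "sets mu = sets borel" by (simp add: mu_def)

lemma emeasure_mu: "A \<in> sets borel \<Longrightarrow> emeasure mu A = emeasure lborel (g -` A \<inter> \<Omega>)"
proof -
  assume A: "A \<in> sets borel"
  have "emeasure mu A = emeasure Mr (g -` A \<inter> space Mr)" unfolding mu_def by (rule emeasure_distr[OF g_meas A])
  moreover have "g -` A \<inter> space Mr \<in> sets Mr" using g_meas A by (rule measurable_sets)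
  ultimately show ?thesis using emeasure_Mr by (simp add: space_Mr)
qed

lemma preimage_borel: "A \<in> sets borel \<Longrightarrow> g -` A \<inter> \<Omega> \<in> sets lborel"
  using measurable_sets[OF g_meas, of A] sets_Mr_iff space_Mr by simp

lemma mu_space: "emeasure mu (space mu) = ennreal Mt"
proof -
  have "space mu = UNIV" by (simp add: mu_def)
  hence "emeasure mu (space mu) = emeasure lborel (g -` UNIV \<inter> \<Omega>)" using emeasure_mu by simp
  also have "\<dots> = ennreal Mt" using Mt_pos by (simp add: Omega_eq)
  finally show ?thesis .
qed

lemma mu_K: "emeasure mu (s_set T x) = ennreal Mt"
proof -
  have "s_set T x \<in> sets borel" using compact_K by (simp add: compact_imp_closed borel_closed)
  hence "emeasure mu (s_set T x) = emeasure lborel (g -` s_set T x \<inter> \<Omega>)" using emeasure_mu by simp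
  also have "g -` s_set T x \<inter> \<Omega> = \<Omega>" using g_in_K by auto
  also have "emeasure lborel \<Omega> = ennreal Mt" using Mt_pos by (simp add: Omega_eq)
  finally show ?thesis .
qed

end

lemma doubling_iter:
  assumes "doubling_space TYPE('a::metric_space)"
  obtains M :: nat where "\<And>(z::'a) R k. R > 0 \<Longrightarrow> \<exists>F. finite F \<and> card F \<le> M ^ k \<and> ball z R \<subseteq> (\<Union>y\<in>F. ball y (R / 2 ^ k))"
proof -
  obtain M :: nat where M: "\<And>(z::'a) \<rho>. \<rho> > 0 \<Longrightarrow> \<exists>F. finite F \<and> card F \<le> M \<and> ball z \<rho> \<subseteq> (\<Union>y\<in>F. ball y (\<rho> / 2))"
    using assms unfolding doubling_space_def by blast
  have "\<exists>F. finite F \<and> card F \<le> M ^ k \<and> ball z R \<subseteq> (\<Union>y\<in>F. ball y (R / 2 ^ k))" if R: "R > 0" for z :: 'a and R k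
  proof (induction k)
    case 0
    show ?case by (intro exI[of _ "{z}"]) simp
  next
    case (Suc k)
    then obtain F where F: "finite F" "card F \<le> M ^ k" "ball z R \<subseteq> (\<Union>y\<in>F. ball y (R / 2 ^ k))" by blast
    have "\<forall>y::'a. \<exists>G. finite G \<and> card G \<le> M \<and> ball y (R / 2 ^ k) \<subseteq> (\<Union>u\<in>G. ball u (R / 2 ^ k / 2))"
    proof (intro allI)
      fix y :: 'a
      show "\<exists>G. finite G \<and> card G \<le> M \<and> ball y (R / 2 ^ k) \<subseteq> (\<Union>u\<in>G. ball u (R / 2 ^ k / 2))"
        by (rule M) (use R in simp)
    qed
    from choice[OF this] obtain G where G0: "\<forall>y::'a. finite (G y) \<and> card (G y) \<le> M \<and> ball y (R / 2 ^ k) \<subseteq> (\<Union>u\<in>G y. ball u (R / 2 ^ k / 2))"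
      by blast
    hence G: "\<And>y. finite (G y)" "\<And>y. card (G y) \<le> M" "\<And>y. ball y (R / 2 ^ k) \<subseteq> (\<Union>u\<in>G y. ball u (R / 2 ^ k / 2))"
      by auto
    define F' where "F' = (\<Union>y\<in>F. G y)"
    have "finite F'" unfolding F'_def using F(1) G(1) by simp
    moreover have "card F' \<le> M ^ Suc k"
    proof -
      have "card F' \<le> (\<Sum>y\<in>F. card (G y))" unfolding F'_def by (rule card_UN_le[OF F(1)])
      also have "\<dots> \<le> (\<Sum>y\<in>F. M)" by (intro sum_mono G(2))
      also have "\<dots> = card F * M" by simp
      also have "\<dots> \<le> M ^ k * M" using F(2) by simp
      finally show ?thesis by (simp add: mult.commute)
    qed
    moreover have "ball z R \<subseteq> (\<Union>u\<in>F'. ball u (R / 2 ^ Suc k))"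
    proof
      fix p assume "p \<in> ball z R"
      then obtain y where y: "y \<in> F" "p \<in> ball y (R / 2 ^ k)" using F(3) by blast
      then obtain u where u: "u \<in> G y" "p \<in> ball u (R / 2 ^ k / 2)" using G(3)[of y] by blast
      have eq: "R / 2 ^ k / 2 = R / 2 ^ Suc k" by simp
      have "u \<in> F'" unfolding F'_def using u(1) y(1) by blast
      thus "p \<in> (\<Union>u\<in>F'. ball u (R / 2 ^ Suc k))" using u(2) unfolding eq by blast
    qed
    ultimately show ?case by blast
  qed
  thus ?thesis by (rule that)
qed

lemma packing:
  fixes E :: "'a::metric_space set"
  assumes cover: "finite F" "ball z R \<subseteq> (\<Union>y\<in>F. ball y \<delta>)"
    and E: "E \<subseteq> ball z R" and sep: "\<And>p q. p \<in> E \<Longrightarrow> q \<in> E \<Longrightarrow> p \<noteq> q \<Longrightarrow> dist p q \<ge> 2 * \<delta>"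
  shows "card E \<le> card F"
proof -
  have "\<forall>p\<in>E. \<exists>y. y \<in> F \<and> p \<in> ball y \<delta>" using E cover(2) by blast
  from bchoice[OF this] obtain f where f0: "\<forall>p\<in>E. f p \<in> F \<and> p \<in> ball (f p) \<delta>" by blast
  hence f: "\<And>p. p \<in> E \<Longrightarrow> f p \<in> F \<and> p \<in> ball (f p) \<delta>" by blast
  have "inj_on f E"
  proof (rule inj_onI)
    fix p q assume pq: "p \<in> E" "q \<in> E" "f p = f q"
    show "p = q"
    proof (rule ccontr)
      assume "p \<noteq> q"
      hence "dist p q \<ge> 2 * \<delta>" using sep pq by blast
      moreover have "dist p q \<le> dist (f p) p + dist (f p) q" by (rule dist_triangle3)
      moreover have "dist (f p) p < \<delta>" "dist (f p) q < \<delta>" using f[OF pq(1)] f[OF pq(2)] pq(3) by auto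
      ultimately show False by linarith
    qed
  qed
  moreover have "f ` E \<subseteq> F" using f by blast
  ultimately show ?thesis using card_inj_on_le cover(1) by blast
qed

context stree
begin

definition sn :: "real \<Rightarrow> (nat \<Rightarrow> nat) \<Rightarrow> nat" where
  "sn \<theta> v = (LEAST n. r (word_prefix v n) \<le> \<theta>)"

definition stop :: "real \<Rightarrow> (nat \<Rightarrow> nat) \<Rightarrow> nat list" where
  "stop \<theta> v = word_prefix v (sn \<theta> v)"

lemma stop_in: "v \<in> T \<Longrightarrow> stop \<theta> v \<in> Tstar T"
  unfolding stop_def by (rule prefix_in)

lemma len_stop: "length (stop \<theta> v) = sn \<theta> v" by (simp add: stop_def)

lemma sn_bound:
  assumes v: "v \<in> T" and th: "\<theta> > 0" and M: "\<forall>I\<in>Tstar T. length I \<ge> M \<longrightarrow> r I < \<theta>"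
  shows "r (stop \<theta> v) \<le> \<theta>" "sn \<theta> v \<le> M"
proof -
  have rM: "r (word_prefix v M) \<le> \<theta>" using bspec[OF M prefix_in[OF v, of M]] by simp
  show "r (stop \<theta> v) \<le> \<theta>" unfolding stop_def sn_def by (rule LeastI[of "\<lambda>n. r (word_prefix v n) \<le> \<theta>", OF rM])
  show "sn \<theta> v \<le> M" unfolding sn_def by (rule Least_le[of "\<lambda>n. r (word_prefix v n) \<le> \<theta>", OF rM])
qed

lemma stop_le: "v \<in> T \<Longrightarrow> \<theta> > 0 \<Longrightarrow> r (stop \<theta> v) \<le> \<theta>"
  using T4[of \<theta>] sn_bound by blast

lemma stop_len_bound: "v \<in> T \<Longrightarrow> \<theta> > 0 \<Longrightarrow> \<forall>I\<in>Tstar T. length I \<ge> M \<longrightarrow> r I < \<theta> \<Longrightarrow> length (stop \<theta> v) \<le> M"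
  using sn_bound(2) len_stop by simp

lemma stop_gt:
  assumes v: "v \<in> T" and th: "\<theta> > 0" "\<theta> < r []"
  shows "r (stop \<theta> v) > \<rho> * \<theta>"
proof -
  have rs: "r (word_prefix v (sn \<theta> v)) \<le> \<theta>" using stop_le[OF v th(1)] by (simp add: stop_def)
  have "sn \<theta> v \<noteq> 0"
  proof
    assume "sn \<theta> v = 0" thus False using rs th by (simp add: word_prefix_def)
  qed
  then obtain k where k: "sn \<theta> v = Suc k" by (cases "sn \<theta> v") auto
  have "k < sn \<theta> v" using k by simp
  hence nk: "\<not> r (word_prefix v k) \<le> \<theta>" unfolding sn_def by (rule not_less_Least)
  have vk: "v k < N" using v TS by (auto simp: Sigma_N_def)
  have "word_prefix v k @ [v k] \<in> Tstar T" using prefix_in[OF v, of "Suc k"] by (simp add: word_prefix_Suc)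
  hence "r (word_prefix v k @ [v k]) \<ge> \<rho> * r (word_prefix v k)" using T5 vk by blast
  moreover have "\<rho> * r (word_prefix v k) > \<rho> * \<theta>" using nk rho by simp
  ultimately show ?thesis by (simp add: stop_def k word_prefix_Suc)
qed

lemma stop_prefix_eq:
  assumes v: "v \<in> T" and v': "v' \<in> T" and th: "\<theta> > 0"
    and nc: "\<not> incomparable (stop \<theta> v) (stop \<theta> v')" and le: "sn \<theta> v \<le> sn \<theta> v'"
  shows "stop \<theta> v = stop \<theta> v'"
proof -
  have e1: "stop \<theta> v = take (sn \<theta> v) (stop \<theta> v')"
    using not_incomparable_prefix[OF nc] le by (simp add: len_stop)
  also have "\<dots> = word_prefix v' (sn \<theta> v)" unfolding stop_def by (rule take_word_prefix[OF le])
  finally have e: "stop \<theta> v = word_prefix v' (sn \<theta> v)" .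
  have "r (word_prefix v' (sn \<theta> v)) \<le> \<theta>" using stop_le[OF v th] e by simp
  hence "sn \<theta> v' \<le> sn \<theta> v" unfolding sn_def[of \<theta> v'] by (rule Least_le)
  hence "sn \<theta> v' = sn \<theta> v" using le by simp
  thus ?thesis using e by (simp add: stop_def)
qed

lemma stop_incomp:
  assumes v: "v \<in> T" and v': "v' \<in> T" and th: "\<theta> > 0" and ne: "stop \<theta> v \<noteq> stop \<theta> v'"
  shows "incomparable (stop \<theta> v) (stop \<theta> v')"
proof (rule ccontr)
  assume nc: "\<not> incomparable (stop \<theta> v) (stop \<theta> v')"
  show False
  proof (cases "sn \<theta> v \<le> sn \<theta> v'")
    case True thus False using stop_prefix_eq[OF v v' th nc] ne by simp
  next
    case False
    have nc': "\<not> incomparable (stop \<theta> v') (stop \<theta> v)" using nc unfolding incomparable_def min.commute[of "length (stop \<theta> v)"] by (simp add: eq_commute)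
    show False using stop_prefix_eq[OF v' v th nc'] False ne by simp
  qed
qed

lemma stop_is_w: "t \<in> \<Omega> \<Longrightarrow> stop \<theta> (om t) = w t (sn \<theta> (om t))"
  unfolding stop_def by (rule om_prefix)

lemma t_in_stop: "t \<in> \<Omega> \<Longrightarrow> t \<in> iv (stop \<theta> (om t))"
  using stop_is_w w_props by simp

lemma dist_stop: "v \<in> T \<Longrightarrow> dist (x (stop \<theta> v)) (pi v) \<le> D * r (stop \<theta> v)"
  unfolding stop_def by (rule dist_pi)

lemma iv_in_stop_w: "I \<in> Tstar T \<Longrightarrow> t \<in> iv I \<Longrightarrow> word_prefix (om t) (length I) = I"
proof -
  assume I: "I \<in> Tstar T" and t: "t \<in> iv I"
  have tO: "t \<in> \<Omega>" using iv_sub_Omega[OF I] t by blast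
  have "w t (length I) = I" using w_char[OF tO I refl] t by simp
  thus ?thesis using om_prefix[OF tO] by simp
qed

end

context stree
begin

lemma emeasure_iv: "emeasure lborel (iv I) = ennreal (m I)"
  unfolding iv_def using m_nn[of I] by simp

lemma mu_ball_eq: "emeasure mu (ball z e) = emeasure lborel (g -` ball z e \<inter> \<Omega>)"
  by (rule emeasure_mu) simp

lemma mu_lower:
  assumes v: "v \<in> T" and e: "0 < e" and small: "e / (4 * D) < r []"
  shows "emeasure mu (ball (pi v) e) \<ge> ennreal ((\<rho> * (e / (4 * D))) powr s)"
proof -
  define \<theta> where "\<theta> = e / (4 * D)"
  have th: "\<theta> > 0" using e Dpos by (simp add: \<theta>_def)
  define I where "I = stop \<theta> v"
  have I: "I \<in> Tstar T" unfolding I_def by (rule stop_in[OF v])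
  have rI: "r I \<le> \<theta>" unfolding I_def by (rule stop_le[OF v th])
  have rI2: "r I > \<rho> * \<theta>" unfolding I_def by (rule stop_gt[OF v th]) (simp add: \<theta>_def small)
  have d1: "dist (x I) (pi v) \<le> D * r I" unfolding I_def by (rule dist_stop[OF v])
  have sub: "iv I \<subseteq> g -` ball (pi v) e \<inter> \<Omega>"
  proof
    fix t assume t: "t \<in> iv I"
    have tO: "t \<in> \<Omega>" using iv_sub_Omega[OF I] t by blast
    have wp: "word_prefix (om t) (length I) = I" by (rule iv_in_stop_w[OF I t])
    have "dist (x (word_prefix (om t) (length I))) (pi (om t)) \<le> D * r (word_prefix (om t) (length I))"
      by (rule dist_pi[OF om_in_T[OF tO]])
    hence d2: "dist (x I) (g t) \<le> D * r I" unfolding wp g_def .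
    have "dist (pi v) (g t) \<le> dist (x I) (pi v) + dist (x I) (g t)" by (rule dist_triangle3)
    also have "\<dots> \<le> 2 * D * \<theta>"
    proof -
      have "D * r I \<le> D * \<theta>" using rI Dpos by (simp add: mult_left_mono)
      thus ?thesis using d1 d2 by linarith
    qed
    also have "\<dots> < e" using e Dpos by (simp add: \<theta>_def)
    finally show "t \<in> g -` ball (pi v) e \<inter> \<Omega>" using tO by simp
  qed
  have "ennreal ((\<rho> * \<theta>) powr s) \<le> ennreal (m I)"
    unfolding m_def using rI2 rho th s0 by (intro ennreal_leI powr_mono2) auto
  also have "\<dots> = emeasure lborel (iv I)" by (simp add: emeasure_iv)
  also have "\<dots> \<le> emeasure lborel (g -` ball (pi v) e \<inter> \<Omega>)"
    by (rule emeasure_mono[OF sub preimage_borel]) simp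
  also have "\<dots> = emeasure mu (ball (pi v) e)" by (simp add: mu_ball_eq)
  finally show ?thesis by (simp add: \<theta>_def)
qed

lemma mu_upper:
  assumes cov: "\<And>(z::'a) R. R > 0 \<Longrightarrow> \<exists>F. finite F \<and> card F \<le> Md \<and> ball z R \<subseteq> (\<Union>y\<in>F. ball y (R / 2 ^ k))"
    and k: "1 + D \<le> C * \<rho> * 2 ^ k"
    and z: "z \<in> s_set T x" and e: "0 < e" "e < r []"
  shows "emeasure mu (ball z e) \<le> ennreal (real Md * e powr s)"
proof -
  define A where "A = g -` ball z e \<inter> \<Omega>"
  define F where "F = (\<lambda>t. stop e (om t)) ` A"
  have AO: "A \<subseteq> \<Omega>" by (auto simp: A_def)
  have Fst: "\<exists>t\<in>A. I = stop e (om t)" if "I \<in> F" for I using that by (auto simp: F_def)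
  have FT: "F \<subseteq> Tstar T" unfolding F_def using stop_in om_in_T AO by blast
  obtain Mb where Mb: "\<forall>I\<in>Tstar T. length I \<ge> Mb \<longrightarrow> r I < e" using T4[OF e(1)] by blast
  have "F \<subseteq> {J \<in> Tstar T. length J \<le> Mb}"
  proof
    fix I assume "I \<in> F"
    then obtain t where t: "t \<in> A" "I = stop e (om t)" using Fst by blast
    have "om t \<in> T" using om_in_T t(1) AO by blast
    thus "I \<in> {J \<in> Tstar T. length J \<le> Mb}" using t stop_in stop_len_bound[OF _ e(1) Mb] by simp
  qed
  hence finF: "finite F" using finite_upto by (rule finite_subset)
  have rF: "r I > \<rho> * e" "r I \<le> e" if IF: "I \<in> F" for I
  proof -
    obtain t where t: "t \<in> A" "I = stop e (om t)" using Fst[OF IF] by blast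
    have "om t \<in> T" using om_in_T t(1) AO by blast
    thus "r I > \<rho> * e" "r I \<le> e" using stop_gt[OF _ e(1) e(2)] stop_le[OF _ e(1)] t(2) by simp_all
  qed
  have sepF: "dist (x I) (x J) \<ge> 2 * (C * \<rho> * e)" if IJ: "I \<in> F" "J \<in> F" "I \<noteq> J" for I J
  proof -
    obtain t where t: "t \<in> A" "I = stop e (om t)" using Fst[OF IJ(1)] by blast
    obtain t' where t': "t' \<in> A" "J = stop e (om t')" using Fst[OF IJ(2)] by blast
    have "om t \<in> T" "om t' \<in> T" using om_in_T t(1) t'(1) AO by blast+
    hence "incomparable I J" using stop_incomp[of "om t" "om t'" e] t(2) t'(2) e(1) IJ(3) by blast
    hence "dist (x I) (x J) \<ge> C * (r I + r J)" using T1 FT IJ by blast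
    moreover have "C * (r I + r J) \<ge> C * (\<rho> * e + \<rho> * e)" using rF[OF IJ(1)] rF[OF IJ(2)] Cpos by simp
    ultimately show ?thesis by (simp add: algebra_simps)
  qed
  have ceFpos: "C * \<rho> * e > 0" using Cpos rho e by simp
  have injF: "inj_on x F"
  proof (rule inj_onI)
    fix I J assume "I \<in> F" "J \<in> F" "x I = x J"
    thus "I = J" using sepF ceFpos by fastforce
  qed
  have Eball: "x ` F \<subseteq> ball z ((1 + D) * e)"
  proof
    fix p assume "p \<in> x ` F"
    then obtain I where I: "I \<in> F" "p = x I" by blast
    obtain t where t: "t \<in> A" "I = stop e (om t)" using Fst[OF I(1)] by blast
    have ot: "om t \<in> T" using om_in_T t(1) AO by blast
    have "dist (x I) (g t) \<le> D * r I" using dist_stop[OF ot] t(2) by (simp add: g_def)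
    also have "\<dots> \<le> D * e" using rF(2)[OF I(1)] Dpos by simp
    finally have d1: "dist (x I) (g t) \<le> D * e" .
    have d2: "dist z (g t) < e" using t(1) by (simp add: A_def)
    have "dist z (x I) \<le> dist z (g t) + dist (x I) (g t)" by (rule dist_triangle2)
    thus "p \<in> ball z ((1 + D) * e)" using d1 d2 I(2) by (simp add: algebra_simps)
  qed
  obtain Fd where Fd: "finite Fd" "card Fd \<le> Md" "ball z ((1 + D) * e) \<subseteq> (\<Union>y\<in>Fd. ball y ((1 + D) * e / 2 ^ k))"
    using cov[of "(1 + D) * e" z] e Dpos by auto
  have dl: "2 * ((1 + D) * e / 2 ^ k) \<le> 2 * (C * \<rho> * e)"
  proof -
    have "(1 + D) * e \<le> C * \<rho> * 2 ^ k * e" using k e by (simp add: mult_right_mono)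
    hence "(1 + D) * e \<le> (C * \<rho> * e) * 2 ^ k" by (simp add: algebra_simps)
    hence "(1 + D) * e / 2 ^ k \<le> C * \<rho> * e" by (simp add: divide_le_eq)
    thus ?thesis by simp
  qed
  have "card (x ` F) \<le> card Fd"
  proof (rule packing[OF Fd(1) Fd(3) Eball])
    fix p q assume "p \<in> x ` F" "q \<in> x ` F" "p \<noteq> q"
    then obtain I J where "I \<in> F" "J \<in> F" "p = x I" "q = x J" "I \<noteq> J" by blast
    thus "dist p q \<ge> 2 * ((1 + D) * e / 2 ^ k)" using sepF dl by fastforce
  qed
  hence cardF: "card F \<le> Md" using card_image[OF injF] Fd(2) by simp
  have Acov: "A \<subseteq> (\<Union>I\<in>F. iv I)"
  proof
    fix t assume t: "t \<in> A"
    hence "t \<in> iv (stop e (om t))" using t_in_stop AO by blast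
    thus "t \<in> (\<Union>I\<in>F. iv I)" using t unfolding F_def by blast
  qed
  have "emeasure mu (ball z e) = emeasure lborel A" by (simp add: mu_ball_eq A_def)
  also have "\<dots> \<le> emeasure lborel (\<Union>I\<in>F. iv I)"
    by (rule emeasure_mono[OF Acov]) (use finF iv_borel in auto)
  also have "\<dots> \<le> (\<Sum>I\<in>F. emeasure lborel (iv I))"
    by (rule emeasure_subadditive_finite[OF finF]) (use iv_borel in auto)
  also have "\<dots> = (\<Sum>I\<in>F. ennreal (m I))" by (simp add: emeasure_iv)
  also have "\<dots> = ennreal (\<Sum>I\<in>F. m I)" by (rule sum_ennreal) (simp add: m_nn)
  also have "(\<Sum>I\<in>F. m I) \<le> (\<Sum>I\<in>F. e powr s)"
  proof (rule sum_mono)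
    fix I assume I: "I \<in> F"
    have "0 \<le> r I" using rpos FT I by fastforce
    thus "m I \<le> e powr s" unfolding m_def using rF(2)[OF I] s0 by (intro powr_mono2) auto
  qed
  also have "(\<Sum>I\<in>F. e powr s) = real (card F) * e powr s" by simp
  also have "\<dots> \<le> real Md * e powr s" using cardF by (intro mult_right_mono) auto
  finally show ?thesis by (simp add: ennreal_leI)
qed

end

context stree
begin

lemma reg_bounds:
  assumes dbl: "doubling_space TYPE('a)"
  shows "\<exists>\<alpha> \<beta> R0. 0 < \<alpha> \<and> 0 < \<beta> \<and> 0 < R0 \<and>
        (\<forall>z \<in> s_set T x. \<forall>e. 0 < e \<and> e \<le> R0 \<longrightarrow>
           ennreal (\<alpha> * e powr s) < emeasure mu (ball z e) \<and>
           emeasure mu (ball z e) < ennreal (\<beta> * e powr s))"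
proof -
  obtain M :: nat where M: "\<And>(z::'a) R k. R > 0 \<Longrightarrow> \<exists>F. finite F \<and> card F \<le> M ^ k \<and> ball z R \<subseteq> (\<Union>y\<in>F. ball y (R / 2 ^ k))"
    using doubling_iter[OF dbl] by blast
  obtain n :: nat where n: "(1 + D) / (C * \<rho>) < real n" using reals_Archimedean2 by blast
  have "real n < 2 ^ n"
  proof -
    have "n < 2 ^ n" by simp
    hence "real n < real (2 ^ n)" by (simp only: of_nat_less_iff)
    thus ?thesis by simp
  qed
  hence "(1 + D) / (C * \<rho>) < 2 ^ n" using n by linarith
  hence kk: "1 + D \<le> C * \<rho> * 2 ^ n" using Cpos rho by (simp add: divide_less_eq mult.commute)
  have r0: "0 < r []" using rpos[OF nil_in] .
  define R0 where "R0 = min (r [] / 2) (D * r [])"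
  define \<alpha> where "\<alpha> = (\<rho> / (4 * D)) powr s / 2"
  define \<beta> where "\<beta> = real (M ^ n) + 1"
  have R0: "0 < R0" using r0 Dpos by (simp add: R0_def)
  have al: "0 < \<alpha>" using rho Dpos by (simp add: \<alpha>_def)
  have be: "0 < \<beta>" unfolding \<beta>_def by (rule add_nonneg_pos) simp_all
  have bounds: "ennreal (\<alpha> * e powr s) < emeasure mu (ball z e) \<and> emeasure mu (ball z e) < ennreal (\<beta> * e powr s)"
    if z: "z \<in> s_set T x" and e: "0 < e" "e \<le> R0" for z e
  proof
    obtain v where v: "v \<in> T" "z = pi v" using z by (auto simp: s_set_eq)
    have small: "e / (4 * D) < r []"
    proof -
      have "e \<le> D * r []" using e by (simp add: R0_def)
      hence "e / (4 * D) \<le> D * r [] / (4 * D)" using Dpos by (intro divide_right_mono) simp_all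
      also have "\<dots> = r [] / 4" using Dpos by simp
      finally show ?thesis using r0 by simp
    qed
    have low: "emeasure mu (ball z e) \<ge> ennreal ((\<rho> * (e / (4 * D))) powr s)"
      using mu_lower[OF v(1) e(1) small] v(2) by simp
    have eq: "(\<rho> * (e / (4 * D))) powr s = (\<rho> / (4 * D)) powr s * e powr s"
      by (simp add: powr_mult[symmetric] field_simps)
    have ps: "0 < e powr s" using e by simp
    have pa: "0 < (\<rho> / (4 * D)) powr s" using rho Dpos by simp
    have "\<alpha> * e powr s < (\<rho> / (4 * D)) powr s * e powr s" using ps pa by (simp add: \<alpha>_def)
    hence "ennreal (\<alpha> * e powr s) < ennreal ((\<rho> * (e / (4 * D))) powr s)"
      unfolding eq using al ps by (subst ennreal_less_iff) auto
    thus "ennreal (\<alpha> * e powr s) < emeasure mu (ball z e)" using low by (rule less_le_trans)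
  next
    have el: "e < r []" using e r0 by (simp add: R0_def)
    have up: "emeasure mu (ball z e) \<le> ennreal (real (M ^ n) * e powr s)"
      by (rule mu_upper[OF M kk z e(1) el])
    have ps: "0 < e powr s" using e by simp
    have "real (M ^ n) * e powr s < \<beta> * e powr s" using ps by (simp add: \<beta>_def distrib_right)
    hence "ennreal (real (M ^ n) * e powr s) < ennreal (\<beta> * e powr s)"
      using ps by (subst ennreal_less_iff) auto
    with up show "emeasure mu (ball z e) < ennreal (\<beta> * e powr s)" by (rule le_less_trans)
  qed
  show ?thesis using R0 al be bounds by blast
qed

lemma regular:
  assumes dbl: "doubling_space TYPE('a)"
  shows "s_regular s (s_set T x)"
proof -
  obtain \<alpha> \<beta> R0 where B: "0 < \<alpha>" "0 < \<beta>" "0 < R0"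
     "\<forall>z \<in> s_set T x. \<forall>e. 0 < e \<and> e \<le> R0 \<longrightarrow>
           ennreal (\<alpha> * e powr s) < emeasure mu (ball z e) \<and>
           emeasure mu (ball z e) < ennreal (\<beta> * e powr s)"
    using reg_bounds[OF dbl] by blast
  have "0 < emeasure mu (s_set T x)" using mu_K Mt_pos by simp
  moreover have "emeasure mu (space mu) < \<infinity>" using mu_space by simp
  ultimately show ?thesis unfolding s_regular_def using compact_K sets_mu B by blast
qed

end

context stree
begin

lemma level_sum: "(\<Sum>I\<in>{I \<in> Tstar T. length I = n}. r I powr s) = Mt"
proof -
  have "{I \<in> Tstar T. length I = n} = {J. length J = n \<and> [] @ J \<in> Tstar T}" by auto
  thus ?thesis using T3[OF nil_in, of n] by (simp add: m_def)
qed

lemma finite_W: "finite {I \<in> Tstar T. length I = n}"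
  by (rule finite_subset[OF _ finite_upto[of n]]) auto

lemma pre_small:
  assumes t: "t > s" and d: "\<delta> > 0" and c: "c > 0"
  shows "hausdorff_pre t \<delta> (s_set T x) \<le> ennreal c"
proof -
  have Mt0: "0 < Mt" by (rule Mt_pos)
  define c' where "c' = c / (D powr t * Mt)"
  have c': "c' > 0" using c Dpos Mt0 by (simp add: c'_def)
  define \<eta> where "\<eta> = min (\<delta> / D / 2) (c' powr (1 / (t - s)))"
  have eta: "\<eta> > 0" using d Dpos c' by (simp add: \<eta>_def)
  obtain n where n: "\<forall>I\<in>Tstar T. length I \<ge> n \<longrightarrow> r I < \<eta>" using T4[OF eta] by blast
  define W where "W = {I \<in> Tstar T. length I = n}"
  have finW: "finite W" unfolding W_def by (rule finite_W)
  obtain h where h: "bij_betw h {0..<card W} W" using ex_bij_betw_nat_finite[OF finW] by blast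
  have hW: "h i \<in> W" if "i < card W" for i using h that by (auto simp: bij_betw_def)
  have hT: "h i \<in> Tstar T" "r (h i) < \<eta>" if "i < card W" for i using hW[OF that] n by (auto simp: W_def)
  define Cv where "Cv i = (if i < card W then closure (S (h i)) else {})" for i
  have cover: "s_set T x \<subseteq> (\<Union>i. Cv i)"
  proof
    fix p assume "p \<in> s_set T x"
    then obtain v where v: "v \<in> T" "p = pi v" by (auto simp: s_set_eq)
    have IW: "word_prefix v n \<in> W" using prefix_in[OF v(1)] by (simp add: W_def)
    then obtain i where i: "i < card W" "h i = word_prefix v n" using h by (force simp: bij_betw_def)
    have "p \<in> Cv i" using pi_in_closure[OF v(1), of n] v(2) i by (simp add: Cv_def)
    thus "p \<in> (\<Union>i. Cv i)" by blast
  qed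
  have bd: "bounded (Cv i)" for i by (simp add: Cv_def S_bounded hT bounded_closure)
  have diam: "diameter (Cv i) \<le> (if i < card W then D * r (h i) else 0)" for i
    by (simp add: Cv_def diameter_closure S_bounded S_diam hT)
  have diam_d: "diameter (Cv i) \<le> \<delta>" for i
  proof (cases "i < card W")
    case True
    have "D * r (h i) \<le> D * \<eta>" using hT(2)[OF True] Dpos by simp
    also have "\<dots> \<le> D * (\<delta> / D / 2)"
    proof -
      have "\<eta> \<le> \<delta> / D / 2" by (simp add: \<eta>_def)
      thus ?thesis using Dpos by (intro mult_left_mono) simp_all
    qed
    also have "\<dots> \<le> \<delta>" using Dpos d by simp
    finally show ?thesis using diam[of i] True by simp
  next
    case False thus ?thesis using diam[of i] d by simp
  qed
  have inset: "Cv \<in> {C :: nat \<Rightarrow> 'a set. s_set T x \<subseteq> (\<Union>i. C i) \<and> (\<forall>i. bounded (C i) \<and> diameter (C i) \<le> \<delta>)}"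
    using cover bd diam_d by blast
  define tm where "tm i = ennreal (if Cv i = {} then 0 else if t = 0 then 1 else diameter (Cv i) powr t)" for i
  define b where "b i = ennreal (if i < card W then (D * r (h i)) powr t else 0)" for i
  have tpos: "t > 0" using t s0 by simp
  have tb: "tm i \<le> b i" for i
  proof (cases "i < card W")
    case True
    have "diameter (Cv i) powr t \<le> (D * r (h i)) powr t"
      using diam[of i] True diameter_ge_0[OF bd[of i]] tpos by (intro powr_mono2) auto
    thus ?thesis using True tpos by (simp add: tm_def b_def)
  next
    case False thus ?thesis by (simp add: tm_def b_def Cv_def)
  qed
  have "hausdorff_pre t \<delta> (s_set T x) \<le> (\<Sum>i. tm i)"
    unfolding hausdorff_pre_def tm_def by (rule INF_lower[OF inset])
  also have "\<dots> \<le> (\<Sum>i. b i)" by (intro suminf_le tb summableI)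
  also have "(\<Sum>i. b i) = (\<Sum>i<card W. b i)" by (rule suminf_finite) (auto simp: b_def)
  also have "\<dots> = ennreal (\<Sum>i<card W. (D * r (h i)) powr t)"
    by (subst sum_ennreal[symmetric]) (auto simp: b_def)
  also have "(\<Sum>i<card W. (D * r (h i)) powr t) = (\<Sum>I\<in>W. (D * r I) powr t)"
    using sum.reindex_bij_betw[OF h, of "\<lambda>I. (D * r I) powr t"] by (simp add: atLeast0LessThan)
  also have "\<dots> \<le> (\<Sum>I\<in>W. D powr t * \<eta> powr (t - s) * r I powr s)"
  proof (rule sum_mono)
    fix I assume I: "I \<in> W"
    have rI: "0 < r I" "r I < \<eta>" using I n rpos by (auto simp: W_def)
    have "(D * r I) powr t = D powr t * (r I powr s * r I powr (t - s))"
      using rI Dpos by (simp add: powr_mult powr_add[symmetric])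
    also have "\<dots> \<le> D powr t * (r I powr s * \<eta> powr (t - s))"
      using rI t by (intro mult_left_mono powr_mono2) auto
    finally show "(D * r I) powr t \<le> D powr t * \<eta> powr (t - s) * r I powr s" by (simp add: algebra_simps)
  qed
  also have "\<dots> = D powr t * \<eta> powr (t - s) * Mt"
    using level_sum[of n] by (simp add: sum_distrib_left[symmetric] W_def)
  also have "\<dots> \<le> D powr t * c' * Mt"
  proof -
    have "\<eta> powr (t - s) \<le> (c' powr (1 / (t - s))) powr (t - s)"
      using eta t by (intro powr_mono2) (auto simp: \<eta>_def)
    also have "\<dots> = c'" using t c' by (simp add: powr_powr)
    finally show ?thesis using Mt0 Dpos by (intro mult_right_mono mult_left_mono) auto
  qed
  also have "\<dots> = c" using Dpos Mt0 by (simp add: c'_def)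
  finally show ?thesis using ennreal_leI by blast
qed

lemma haus_zero:
  assumes t: "t > s"
  shows "hausdorff_measure t (s_set T x) = 0"
proof -
  have "hausdorff_pre t \<delta> (s_set T x) = 0" if d: "\<delta> > 0" for \<delta>
  proof -
    have "hausdorff_pre t \<delta> (s_set T x) \<le> 0"
    proof (rule ennreal_le_epsilon)
      fix e :: real assume "0 < e"
      thus "hausdorff_pre t \<delta> (s_set T x) \<le> 0 + ennreal e" using pre_small[OF t d] by simp
    qed
    thus ?thesis by simp
  qed
  thus ?thesis unfolding hausdorff_measure_def by simp
qed

end

context stree
begin

lemma ball_sets_mu: "ball z e \<in> sets mu" by (simp add: sets_mu)
lemma cball_sets_mu: "cball z e \<in> sets mu" by (simp add: sets_mu)

lemma cball_bound:
  assumes reg: "\<forall>z \<in> s_set T x. \<forall>e. 0 < e \<and> e \<le> R0 \<longrightarrow> emeasure mu (ball z e) < ennreal (\<beta> * e powr s)"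
    and be: "0 < \<beta>" and R0: "0 < R0"
    and z: "z \<in> s_set T x" and d: "0 \<le> d" "2 * d \<le> R0" and ds: "d > 0 \<or> s > 0"
  shows "emeasure mu (cball z d) \<le> ennreal (\<beta> * 2 powr s * d powr s)"
proof (cases "d > 0")
  case True
  have "emeasure mu (cball z d) \<le> emeasure mu (ball z (2 * d))"
    using True by (intro emeasure_mono ball_sets_mu) (auto simp: subset_iff)
  also have "\<dots> < ennreal (\<beta> * (2 * d) powr s)" using reg z True d by simp
  also have "(2 * d) powr s = 2 powr s * d powr s" by (simp add: powr_mult)
  finally show ?thesis by (simp add: mult.assoc)
next
  case False
  hence d0: "d = 0" and s: "s > 0" using d ds by auto
  have "emeasure mu (cball z d) \<le> 0"
  proof (rule ennreal_le_epsilon)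
    fix c :: real assume c: "0 < c"
    define e where "e = min R0 ((c / \<beta>) powr (1 / s))"
    have e: "0 < e" "e \<le> R0" using R0 c be by (auto simp: e_def)
    have "emeasure mu (cball z d) \<le> emeasure mu (ball z e)"
      using e d0 by (intro emeasure_mono ball_sets_mu) (auto simp: subset_iff)
    also have "\<dots> \<le> ennreal (\<beta> * e powr s)" using reg z e by (simp add: order.strict_implies_order)
    also have "\<beta> * e powr s \<le> \<beta> * ((c / \<beta>) powr (1 / s)) powr s"
      using e s be by (intro mult_left_mono powr_mono2) (auto simp: e_def)
    also have "\<dots> = c" using s be c by (simp add: powr_powr)
    finally show "emeasure mu (cball z d) \<le> 0 + ennreal c" using ennreal_leI by (auto intro: order.trans)
  qed
  thus ?thesis by simp
qed

lemma ennreal_div_bound: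
  fixes X :: ennreal
  assumes c: "c > 0" and a: "aa \<ge> 0" and le: "ennreal aa \<le> ennreal c * X"
  shows "ennreal (aa / c) \<le> X"
proof -
  have "ennreal (aa / c) = ennreal (1 / c) * ennreal aa" using c a by (simp add: ennreal_mult[symmetric])
  also have "\<dots> \<le> ennreal (1 / c) * (ennreal c * X)" by (rule mult_left_mono[OF le]) simp
  also have "\<dots> = (ennreal (1 / c) * ennreal c) * X" by (simp add: mult.assoc)
  also have "ennreal (1 / c) * ennreal c = 1" using c by (simp add: ennreal_mult[symmetric])
  finally show ?thesis by simp
qed

lemma haus_pos:
  assumes reg: "\<forall>z \<in> s_set T x. \<forall>e. 0 < e \<and> e \<le> R0 \<longrightarrow> emeasure mu (ball z e) < ennreal (\<beta> * e powr s)"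
    and be: "0 < \<beta>" and R0: "0 < R0"
    and s: "s > 0" and t: "0 \<le> t" "t < s"
  shows "hausdorff_measure t (s_set T x) \<noteq> 0"
proof -
  define K where "K = s_set T x"
  define \<delta> where "\<delta> = min 1 (R0 / 2)"
  have dpos: "\<delta> > 0" using R0 by (simp add: \<delta>_def)
  define c where "c = \<beta> * 2 powr s"
  have c: "c > 0" using be by (simp add: c_def)
  have lb: "ennreal (Mt / c) \<le> hausdorff_pre t \<delta> K"
    unfolding hausdorff_pre_def
  proof (rule INF_greatest)
    fix Cv :: "nat \<Rightarrow> 'a set"
    assume "Cv \<in> {C. K \<subseteq> (\<Union>i. C i) \<and> (\<forall>i. bounded (C i) \<and> diameter (C i) \<le> \<delta>)}"
    hence cov: "K \<subseteq> (\<Union>i. Cv i)" and bd: "\<And>i. bounded (Cv i)" and dd: "\<And>i. diameter (Cv i) \<le> \<delta>" by auto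
    define tm where "tm i = ennreal (if Cv i = {} then 0 else if t = 0 then 1 else diameter (Cv i) powr t)" for i
    define z where "z i = (SOME p. p \<in> Cv i \<inter> K)" for i
    define f where "f i = (if Cv i \<inter> K \<noteq> {} then cball (z i) (diameter (Cv i)) else {})" for i
    have zi: "z i \<in> Cv i \<inter> K" if "Cv i \<inter> K \<noteq> {}" for i
      unfolding z_def using that by (metis some_in_eq)
    have Kf: "K \<subseteq> (\<Union>i. f i)"
    proof
      fix p assume p: "p \<in> K"
      then obtain i where i: "p \<in> Cv i" using cov by blast
      hence ne: "Cv i \<inter> K \<noteq> {}" using p by blast
      have "dist (z i) p \<le> diameter (Cv i)" using zi[OF ne] i bd by (intro diameter_bounded_bound) auto
      hence "p \<in> f i" using ne by (simp add: f_def)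
      thus "p \<in> (\<Union>i. f i)" by blast
    qed
    have fsets: "range f \<subseteq> sets mu" by (auto simp: f_def sets_mu)
    have fi: "emeasure mu (f i) \<le> ennreal c * tm i" for i
    proof (cases "Cv i \<inter> K \<noteq> {}")
      case True
      have d0: "0 \<le> diameter (Cv i)" by (rule diameter_ge_0[OF bd])
      have d1: "diameter (Cv i) \<le> 1" "2 * diameter (Cv i) \<le> R0" using dd[of i] by (auto simp: \<delta>_def)
      have "emeasure mu (f i) \<le> ennreal (\<beta> * 2 powr s * diameter (Cv i) powr s)"
        using True cball_bound[OF reg be R0 _ d0 d1(2)] zi[OF True] s by (simp add: f_def K_def)
      also have "diameter (Cv i) powr s \<le> (if t = 0 then 1 else diameter (Cv i) powr t)"
      proof (cases "t = 0")
        case True thus ?thesis using d0 d1 s by (simp add: powr_le1)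
      next
        case False thus ?thesis using d0 d1 t by (simp add: powr_mono')
      qed
      also have "ennreal (\<beta> * 2 powr s * (if t = 0 then 1 else diameter (Cv i) powr t)) = ennreal c * tm i"
        using True c by (auto simp: tm_def c_def ennreal_mult)
      finally have fin: "(\<And>x y. x \<le> y \<Longrightarrow> ennreal (\<beta> * 2 powr s * x) \<le> ennreal (\<beta> * 2 powr s * y)) \<Longrightarrow>
        emeasure mu (f i) \<le> ennreal c * tm i" .
      have mono: "\<And>x y. x \<le> y \<Longrightarrow> ennreal (\<beta> * 2 powr s * x) \<le> ennreal (\<beta> * 2 powr s * y)"
        using be by (intro ennreal_leI mult_left_mono) auto
      show ?thesis by (rule fin[OF mono])
    next
      case False thus ?thesis by (simp add: f_def)
    qed
    have "ennreal Mt = emeasure mu K" using mu_K by (simp add: K_def)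
    also have "\<dots> \<le> emeasure mu (\<Union>i. f i)" using Kf fsets by (intro emeasure_mono) auto
    also have "\<dots> \<le> (\<Sum>i. emeasure mu (f i))" by (rule emeasure_subadditive_countably[OF fsets])
    also have "\<dots> \<le> (\<Sum>i. ennreal c * tm i)" by (intro suminf_le fi summableI)
    also have "\<dots> = ennreal c * (\<Sum>i. tm i)" by simp
    finally have "ennreal Mt \<le> ennreal c * (\<Sum>i. tm i)" .
    hence "ennreal (Mt / c) \<le> (\<Sum>i. tm i)" using c m_nn by (intro ennreal_div_bound) auto
    thus "ennreal (Mt / c) \<le> (\<Sum>i. ennreal (if Cv i = {} then 0 else if t = 0 then 1 else diameter (Cv i) powr t))"
      by (simp add: tm_def)
  qed
  have "0 < ennreal (Mt / c)" using Mt_pos c by simp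
  also have "\<dots> \<le> hausdorff_measure t K" unfolding hausdorff_measure_def
    using lb dpos by (intro order.trans[OF lb] SUP_upper) auto
  finally show ?thesis by (simp add: K_def)
qed

end

context stree
begin

definition covset :: "real \<Rightarrow> nat set" where
  "covset \<delta> = {card F | F. finite F \<and> s_set T x \<subseteq> \<Union>F \<and> (\<forall>B\<in>F. bounded B \<and> diameter B \<le> \<delta>)}"

lemma covering_number_eq: "covering_number (s_set T x) \<delta> = Inf (covset \<delta>)"
  by (simp add: covering_number_def covset_def)

lemma cov_upper:
  assumes d: "0 < \<delta>" "\<delta> / D < r []"
  shows "covset \<delta> \<noteq> {}" "real (covering_number (s_set T x) \<delta>) \<le> Mt * (D / (\<rho> * \<delta>)) powr s"
proof -
  define \<theta> where "\<theta> = \<delta> / D"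
  have th: "0 < \<theta>" "\<theta> < r []" using d Dpos by (auto simp: \<theta>_def)
  define Fs where "Fs = (\<lambda>v. stop \<theta> v) ` T"
  obtain Mb where Mb: "\<forall>I\<in>Tstar T. length I \<ge> Mb \<longrightarrow> r I < \<theta>" using T4[OF th(1)] by blast
  have FsT: "Fs \<subseteq> {J \<in> Tstar T. length J \<le> Mb}"
    unfolding Fs_def using stop_in stop_len_bound[OF _ th(1) Mb] by blast
  hence finFs: "finite Fs" using finite_upto by (rule finite_subset)
  define F where "F = (\<lambda>I. closure (S I)) ` Fs"
  have finF: "finite F" unfolding F_def using finFs by simp
  have cardF: "card F \<le> card Fs" unfolding F_def using finFs by (rule card_image_le)
  have Kcov: "s_set T x \<subseteq> \<Union>F"
  proof
    fix p assume "p \<in> s_set T x"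
    then obtain v where v: "v \<in> T" "p = pi v" by (auto simp: s_set_eq)
    have "p \<in> closure (S (stop \<theta> v))" using pi_in_closure[OF v(1)] v(2) by (simp add: stop_def)
    moreover have "closure (S (stop \<theta> v)) \<in> F" using v(1) by (auto simp: F_def Fs_def)
    ultimately show "p \<in> \<Union>F" by blast
  qed
  have Fprop: "\<forall>B\<in>F. bounded B \<and> diameter B \<le> \<delta>"
  proof
    fix B assume "B \<in> F"
    then obtain v where v: "v \<in> T" "B = closure (S (stop \<theta> v))" by (auto simp: F_def Fs_def)
    have I: "stop \<theta> v \<in> Tstar T" by (rule stop_in[OF v(1)])
    have "diameter B \<le> D * r (stop \<theta> v)" using v(2) I by (simp add: diameter_closure S_bounded S_diam)
    also have "\<dots> \<le> D * \<theta>" using stop_le[OF v(1) th(1)] Dpos by simp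
    also have "\<dots> = \<delta>" using Dpos by (simp add: \<theta>_def)
    finally show "bounded B \<and> diameter B \<le> \<delta>" using v(2) I by (simp add: S_bounded bounded_closure)
  qed
  have mem: "card F \<in> covset \<delta>" unfolding covset_def using finF Kcov Fprop by blast
  thus "covset \<delta> \<noteq> {}" by blast
  have "covering_number (s_set T x) \<delta> \<le> card F" unfolding covering_number_eq by (rule cInf_lower[OF mem]) simp
  hence c1: "real (covering_number (s_set T x) \<delta>) \<le> real (card Fs)" using cardF by linarith
  have mlow: "(\<rho> * \<theta>) powr s \<le> m I" if IF: "I \<in> Fs" for I
  proof -
    obtain v where v: "v \<in> T" "I = stop \<theta> v" using IF by (auto simp: Fs_def)
    have "\<rho> * \<theta> < r I" using stop_gt[OF v(1) th] v(2) by simp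
    thus ?thesis unfolding m_def using rho th s0 by (intro powr_mono2) auto
  qed
  have FsTT: "Fs \<subseteq> Tstar T" using FsT by blast
  have disj: "disjoint_family_on iv Fs"
    unfolding disjoint_family_on_def
  proof (intro ballI impI)
    fix I J assume IJ: "I \<in> Fs" "J \<in> Fs" "I \<noteq> J"
    obtain v where v: "v \<in> T" "I = stop \<theta> v" using IJ(1) by (auto simp: Fs_def)
    obtain v' where v': "v' \<in> T" "J = stop \<theta> v'" using IJ(2) by (auto simp: Fs_def)
    have "incomparable I J" using stop_incomp[OF v(1) v'(1) th(1)] v(2) v'(2) IJ(3) by simp
    thus "iv I \<inter> iv J = {}" using incomp_disj FsTT IJ by blast
  qed
  have "ennreal (real (card Fs) * (\<rho> * \<theta>) powr s) = ennreal (\<Sum>I\<in>Fs. (\<rho> * \<theta>) powr s)" by simp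
  also have "\<dots> \<le> ennreal (\<Sum>I\<in>Fs. m I)" by (intro ennreal_leI sum_mono mlow)
  also have "\<dots> = (\<Sum>I\<in>Fs. ennreal (m I))" by (rule sum_ennreal[symmetric]) (simp add: m_nn)
  also have "\<dots> = (\<Sum>I\<in>Fs. emeasure lborel (iv I))" by (simp add: emeasure_iv)
  also have "\<dots> = emeasure lborel (\<Union>I\<in>Fs. iv I)" by (rule sum_emeasure) (use iv_borel disj finFs in auto)
  also have "\<dots> \<le> emeasure lborel \<Omega>"
  proof -
    have "(\<Union>I\<in>Fs. iv I) \<subseteq> \<Omega>" using iv_sub_Omega FsTT by blast
    thus ?thesis by (rule emeasure_mono[OF _ iv_borel])
  qed
  also have "\<dots> = ennreal Mt" using Mt_pos by (simp add: Omega_eq)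
  finally have "real (card Fs) * (\<rho> * \<theta>) powr s \<le> Mt" using Mt_pos by (subst (asm) ennreal_le_iff) auto
  hence "real (card Fs) \<le> Mt / (\<rho> * \<theta>) powr s" using rho th by (simp add: le_divide_eq)
  also have "Mt / (\<rho> * \<theta>) powr s = Mt * (D / (\<rho> * \<delta>)) powr s"
  proof -
    have e: "D / (\<rho> * \<delta>) = inverse (\<rho> * \<theta>)" using Dpos d by (simp add: \<theta>_def field_simps)
    show ?thesis unfolding e inverse_powr by (simp only: divide_inverse)
  qed
  finally show "real (covering_number (s_set T x) \<delta>) \<le> Mt * (D / (\<rho> * \<delta>)) powr s" using c1 by linarith
qed

lemma cov_lower:
  assumes reg: "\<forall>z \<in> s_set T x. \<forall>e. 0 < e \<and> e \<le> R0 \<longrightarrow> emeasure mu (ball z e) < ennreal (\<beta> * e powr s)"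
    and be: "0 < \<beta>" and R0: "0 < R0" and ne: "covset \<delta> \<noteq> {}"
    and d: "0 < \<delta>" "2 * \<delta> \<le> R0"
  shows "Mt \<le> real (covering_number (s_set T x) \<delta>) * (\<beta> * 2 powr s * \<delta> powr s)"
proof -
  have "Mt \<le> real n * (\<beta> * 2 powr s * \<delta> powr s)" if n: "n \<in> covset \<delta>" for n
  proof -
    obtain F where F: "n = card F" "finite F" "s_set T x \<subseteq> \<Union>F" "\<forall>B\<in>F. bounded B \<and> diameter B \<le> \<delta>"
      using n by (auto simp: covset_def)
    define F' where "F' = {B \<in> F. B \<inter> s_set T x \<noteq> {}}"
    define z where "z B = (SOME p. p \<in> B \<inter> s_set T x)" for B
    have zB: "z B \<in> B \<inter> s_set T x" if BF: "B \<in> F'" for B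
    proof -
      have "\<exists>p. p \<in> B \<inter> s_set T x" using BF by (auto simp: F'_def)
      thus ?thesis unfolding z_def by (rule someI_ex)
    qed
    have finF': "finite F'" using F(2) by (simp add: F'_def)
    have Kc: "s_set T x \<subseteq> (\<Union>B\<in>F'. cball (z B) \<delta>)"
    proof
      fix p assume p: "p \<in> s_set T x"
      then obtain B where B: "B \<in> F" "p \<in> B" using F(3) by blast
      hence BF': "B \<in> F'" using p by (auto simp: F'_def)
      have "dist (z B) p \<le> diameter B" using zB[OF BF'] B F(4) by (intro diameter_bounded_bound) auto
      also have "\<dots> \<le> \<delta>" using F(4) B by blast
      finally have "p \<in> cball (z B) \<delta>" by simp
      thus "p \<in> (\<Union>B\<in>F'. cball (z B) \<delta>)" using BF' by blast
    qed
    have "ennreal Mt = emeasure mu (s_set T x)" using mu_K by simp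
    also have "\<dots> \<le> emeasure mu (\<Union>B\<in>F'. cball (z B) \<delta>)"
    proof (rule emeasure_mono[OF Kc])
      show "(\<Union>B\<in>F'. cball (z B) \<delta>) \<in> sets mu" using finF' by (intro sets.finite_UN cball_sets_mu)
    qed
    also have "\<dots> \<le> (\<Sum>B\<in>F'. emeasure mu (cball (z B) \<delta>))"
      by (rule emeasure_subadditive_finite[OF finF']) (use cball_sets_mu in blast)
    also have "\<dots> \<le> (\<Sum>B\<in>F'. ennreal (\<beta> * 2 powr s * \<delta> powr s))"
    proof (rule sum_mono)
      fix B assume "B \<in> F'"
      thus "emeasure mu (cball (z B) \<delta>) \<le> ennreal (\<beta> * 2 powr s * \<delta> powr s)"
        using cball_bound[OF reg be R0 _ _ d(2)] zB d by auto
    qed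
    also have "\<dots> = ennreal (real (card F') * (\<beta> * 2 powr s * \<delta> powr s))"
      using be by (simp add: ennreal_mult ennreal_of_nat_eq_real_of_nat)
    finally have "Mt \<le> real (card F') * (\<beta> * 2 powr s * \<delta> powr s)"
      using be by (subst (asm) ennreal_le_iff) auto
    also have "\<dots> \<le> real n * (\<beta> * 2 powr s * \<delta> powr s)"
    proof -
      have "card F' \<le> card F" unfolding F'_def using F(2) by (intro card_mono) auto
      thus ?thesis using F(1) be by (intro mult_right_mono) auto
    qed
    finally show ?thesis .
  qed
  moreover have "covering_number (s_set T x) \<delta> \<in> covset \<delta>"
    unfolding covering_number_eq by (rule Inf_nat_def1[OF ne])
  ultimately show ?thesis by blast
qed

end

context stree
begin

lemma hdim:
  assumes reg: "\<forall>z \<in> s_set T x. \<forall>e. 0 < e \<and> e \<le> R0 \<longrightarrow> emeasure mu (ball z e) < ennreal (\<beta> * e powr s)"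
    and be: "0 < \<beta>" and R0: "0 < R0"
  shows "hausdorff_dim (s_set T x) = ereal s"
proof -
  define S where "S = {ereal t | t. t \<ge> 0 \<and> hausdorff_measure t (s_set T x) = 0}"
  have low: "ereal s \<le> y" if y: "y \<in> S" for y
  proof -
    obtain t where t: "y = ereal t" "t \<ge> 0" "hausdorff_measure t (s_set T x) = 0" using y by (auto simp: S_def)
    have "s \<le> t"
    proof (rule ccontr)
      assume "\<not> s \<le> t"
      hence "t < s" "s > 0" using t(2) by auto
      thus False using haus_pos[OF reg be R0 \<open>s > 0\<close> t(2) \<open>t < s\<close>] t(3) by simp
    qed
    thus ?thesis using t(1) by simp
  qed
  have up: "Inf S \<le> ereal s + ereal e" if e: "0 < e" for e :: real
  proof -
    have "ereal (s + e) \<in> S" unfolding S_def using haus_zero[of "s + e"] e s0 by auto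
    hence "Inf S \<le> ereal (s + e)" by (rule Inf_lower)
    thus ?thesis by simp
  qed
  have "Inf S \<le> ereal s" by (rule ereal_le_epsilon2) (use up in blast)
  moreover have "ereal s \<le> Inf S" by (rule Inf_greatest) (use low in blast)
  ultimately show ?thesis unfolding hausdorff_dim_def S_def[symmetric] by simp
qed

lemma lim_aux: "((\<lambda>\<delta>::real. ln c / (- ln \<delta>) + s) \<longlongrightarrow> s) (at_right 0)"
proof -
  have g: "filterlim (\<lambda>\<delta>::real. - ln \<delta>) at_infinity (at_right 0)"
    using filterlim_uminus_at_bot[THEN iffD1, OF ln_at_0] by (rule filterlim_at_top_imp_at_infinity)
  have "((\<lambda>\<delta>::real. ln c / (- ln \<delta>) + s) \<longlongrightarrow> 0 + s) (at_right 0)"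
    by (intro tendsto_add tendsto_divide_0[OF tendsto_const g] tendsto_const)
  thus ?thesis by simp
qed

lemma mdim:
  assumes reg: "\<forall>z \<in> s_set T x. \<forall>e. 0 < e \<and> e \<le> R0 \<longrightarrow> emeasure mu (ball z e) < ennreal (\<beta> * e powr s)"
    and be: "0 < \<beta>" and R0: "0 < R0"
  shows "upper_minkowski_dim (s_set T x) = ereal s"
proof -
  define f where "f \<delta> = ln (real (covering_number (s_set T x) \<delta>)) / - ln \<delta>" for \<delta> :: real
  define \<delta>1 where "\<delta>1 = min (1/2) (min (R0 / 2) (D * r []))"
  have d1: "0 < \<delta>1" using R0 Dpos rpos[OF nil_in] by (simp add: \<delta>1_def)
  define c1 where "c1 = Mt / (\<beta> * 2 powr s)"
  define c2 where "c2 = Mt * (D / \<rho>) powr s"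
  have c1: "c1 > 0" using Mt_pos be by (simp add: c1_def)
  have c2: "c2 > 0" using Mt_pos Dpos rho by (simp add: c2_def)
  have bnds: "ln c1 / (- ln \<delta>) + s \<le> f \<delta> \<and> f \<delta> \<le> ln c2 / (- ln \<delta>) + s" if d: "\<delta> \<in> {0<..<\<delta>1}" for \<delta>
  proof -
    have dp: "0 < \<delta>" "\<delta> < 1" "2 * \<delta> \<le> R0" "\<delta> / D < r []" using d Dpos
      by (auto simp: \<delta>1_def divide_less_eq mult.commute)
    define N where "N = real (covering_number (s_set T x) \<delta>)"
    have L: "0 < - ln \<delta>" using dp by simp
    have upN: "N \<le> Mt * (D / (\<rho> * \<delta>)) powr s" using cov_upper(2)[OF dp(1) dp(4)] by (simp add: N_def)
    have lowN: "Mt \<le> N * (\<beta> * 2 powr s * \<delta> powr s)"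
      using cov_lower[OF reg be R0 cov_upper(1)[OF dp(1) dp(4)] dp(1) dp(3)] by (simp add: N_def)
    have e2: "Mt * (D / (\<rho> * \<delta>)) powr s = c2 * \<delta> powr (- s)"
    proof -
      have e: "D / (\<rho> * \<delta>) = (D / \<rho>) * inverse \<delta>" by (simp add: field_simps)
      hence "(D / (\<rho> * \<delta>)) powr s = (D / \<rho>) powr s * \<delta> powr (- s)"
        by (simp only: e powr_mult inverse_powr powr_minus)
      thus ?thesis by (simp add: c2_def)
    qed
    have e1: "c1 * \<delta> powr (- s) \<le> N"
    proof -
      have pos: "0 < \<beta> * 2 powr s * \<delta> powr s" using be dp by simp
      have "Mt / (\<beta> * 2 powr s * \<delta> powr s) \<le> N" using lowN pos by (simp add: divide_le_eq)
      moreover have "Mt / (\<beta> * 2 powr s * \<delta> powr s) = c1 * \<delta> powr (- s)"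
        using dp by (simp add: c1_def powr_minus divide_inverse)
      ultimately show ?thesis by simp
    qed
    have "0 < c1 * \<delta> powr (- s)" using c1 dp(1) by simp
    hence Npos: "0 < N" using e1 by linarith
    have lnU: "ln N \<le> ln c2 + s * (- ln \<delta>)"
    proof -
      have "ln N \<le> ln (c2 * \<delta> powr (- s))" using upN e2 Npos by simp
      also have "\<dots> = ln c2 + s * (- ln \<delta>)" using c2 dp by (simp add: ln_mult)
      finally show ?thesis .
    qed
    have lnL: "ln c1 + s * (- ln \<delta>) \<le> ln N"
    proof -
      have "ln (c1 * \<delta> powr (- s)) \<le> ln N" using e1 c1 dp Npos by (subst ln_le_cancel_iff) auto
      moreover have "ln (c1 * \<delta> powr (- s)) = ln c1 + s * (- ln \<delta>)" using c1 dp by (simp add: ln_mult)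
      ultimately show ?thesis by simp
    qed
    have "f \<delta> = ln N / (- ln \<delta>)" by (simp add: f_def N_def)
    moreover have "ln c1 / (- ln \<delta>) + s = (ln c1 + s * (- ln \<delta>)) / (- ln \<delta>)" using L by (simp add: field_simps)
    moreover have "ln c2 / (- ln \<delta>) + s = (ln c2 + s * (- ln \<delta>)) / (- ln \<delta>)" using L by (simp add: field_simps)
    moreover have "(ln c1 + s * (- ln \<delta>)) / (- ln \<delta>) \<le> ln N / (- ln \<delta>)"
      by (rule divide_right_mono[OF lnL]) (use L in simp)
    moreover have "ln N / (- ln \<delta>) \<le> (ln c2 + s * (- ln \<delta>)) / (- ln \<delta>)"
      by (rule divide_right_mono[OF lnU]) (use L in simp)
    ultimately show ?thesis by linarith
  qed
  have ev: "eventually (\<lambda>\<delta>. \<delta> \<in> {0<..<\<delta>1}) (at_right 0)" by (rule eventually_at_right_real[OF d1])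
  have "(f \<longlongrightarrow> s) (at_right 0)"
  proof (rule tendsto_sandwich[OF _ _ lim_aux[of c1] lim_aux[of c2]])
    show "\<forall>\<^sub>F \<delta> in at_right 0. ln c1 / - ln \<delta> + s \<le> f \<delta>" using ev by eventually_elim (use bnds in blast)
    show "\<forall>\<^sub>F \<delta> in at_right 0. f \<delta> \<le> ln c2 / - ln \<delta> + s" using ev by eventually_elim (use bnds in blast)
  qed
  hence "((\<lambda>\<delta>. ereal (f \<delta>)) \<longlongrightarrow> ereal s) (at_right 0)" by (rule tendsto_ereal)
  hence "Limsup (at_right 0) (\<lambda>\<delta>. ereal (f \<delta>)) = ereal s" by (intro lim_imp_Limsup) simp_all
  thus ?thesis unfolding upper_minkowski_dim_def f_def by simp
qed

end

theorem mainTheorem4: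
  fixes N :: nat and s :: real and T :: "(nat \<Rightarrow> nat) set"
    and x :: "nat list \<Rightarrow> 'a::complete_space" and r :: "nat list \<Rightarrow> real"
  assumes "doubling_space TYPE('a)"
    and "s_tree N s T x r"
    and "closedin (top_of_set (Sigma_N N)) T"
  shows "s_regular s (s_set T x) \<and> hausdorff_dim (s_set T x) = upper_minkowski_dim (s_set T x)"
proof -
  from assms(2) obtain \<rho> C D where
    a: "N \<ge> 2" "s \<ge> 0" "T \<noteq> {}" "T \<subseteq> Sigma_N N" "\<forall>I \<in> Tstar T. 0 < r I" "0 < \<rho>" "0 < C" "0 < D"
    and t1: "\<forall>I \<in> Tstar T. \<forall>J \<in> Tstar T. incomparable I J \<longrightarrow> dist (x I) (x J) \<ge> C * (r I + r J)"
    and t2: "\<forall>I \<in> Tstar T. bounded {x (I @ J) | J. I @ J \<in> Tstar T} \<and>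
                       diameter {x (I @ J) | J. I @ J \<in> Tstar T} \<le> D * r I"
    and t3: "\<forall>I \<in> Tstar T. \<forall>n::nat.
          (\<Sum>J \<in> {J. length J = n \<and> I @ J \<in> Tstar T}. r (I @ J) powr s) = r I powr s"
    and t4: "\<forall>\<epsilon>>0. \<exists>m. \<forall>I \<in> Tstar T. length I \<ge> m \<longrightarrow> r I < \<epsilon>"
    and t5: "\<forall>I j. j < N \<longrightarrow> I @ [j] \<in> Tstar T \<longrightarrow> r (I @ [j]) \<ge> \<rho> * r I"
    unfolding s_tree_def by blast
  have st: "stree N s T x r \<rho> C D"
    by unfold_locales (use a t1 t2 t3 t4 t5 assms(3) in auto)
  interpret stree N s T x r \<rho> C D by (rule st)
  obtain \<alpha> \<beta> R0 where B: "0 < \<alpha>" "0 < \<beta>" "0 < R0"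
     "\<forall>z \<in> s_set T x. \<forall>e. 0 < e \<and> e \<le> R0 \<longrightarrow>
           ennreal (\<alpha> * e powr s) < emeasure mu (ball z e) \<and>
           emeasure mu (ball z e) < ennreal (\<beta> * e powr s)"
    using reg_bounds[OF assms(1)] by blast
  have reg: "\<forall>z \<in> s_set T x. \<forall>e. 0 < e \<and> e \<le> R0 \<longrightarrow> emeasure mu (ball z e) < ennreal (\<beta> * e powr s)"
    using B(4) by blast
  show ?thesis using regular[OF assms(1)] hdim[OF reg B(2) B(3)] mdim[OF reg B(2) B(3)] by simp
qed

end
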